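(* Let $\mathbb{H}$ be a real-valued function on all quantum channels between finite-dimensional systems that satisfies monotonicity and additivity (as in the definition of channel entropy, without the normalization requirement) and is not identically zero. Then $\mathbb{H}(\mathbf{u}_2)>0$, where $\mathbf{u}_2$ is the uniform qubit state viewed as a channel with trivial input.
   Context: Systems are finite-dimensional; $\mathbf{u}^B=I^B/|B|$; a state $\rho^B$ is identified with the channel $\mathbb{C}\to B$, $1\mapsto\rho$. A superchannel from $\mathrm{CPTP}(A\to B)$ to $\mathrm{CPTP}(A'\to B)$ is $\Theta[\mathcal{N}]=\mathcal{E}^{RB\to B}\circ\mathcal{N}^{A\to B}\circ\mathcal{V}^{A'\to RA}$ with $\mathcal{V}$ an isometry channel and $\mathcal{E}$ a channel; it is mixing if in a realization with minimal $|R|$, $\mathcal{E}(\tau^R\otimes\mathbf{u}^B)=\mathbf{u}^B$ for every density matrix $\tau^R$. For same output system, $\mathcal{N}\succ\mathcal{M}$ iff $\mathcal{M}=\Theta[\mathcal{N}]$ for a mixing $\Theta$. For $\mathcal{N}\in\mathrm{CPTP}(A\to B)$, $\mathcal{M}\in\mathrm{CPTP}(A'\to B')$ in general: if $|B|>|B'|$, $\mathcal{N}\succ\mathcal{M}$ iff $\mathcal{N}\succ\mathcal{U}\circ\mathcal{M}$ for some isometry channel $\mathcal{U}:B'\to B$; if $|B|\le|B'|$, iff $\mathcal{W}\circ\mathcal{N}\succ\mathcal{M}$ for some isometry channel $\mathcal{W}:B\to B'$. Monotonicity: $\mathcal{N}^{A\to B}\succ\mathcal{M}^{A'\to B'}$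 implies $\mathbb{H}(\mathcal{N})\le\mathbb{H}(\mathcal{M})$. Additivity: $\mathbb{H}(\mathcal{N}\otimes\mathcal{M})=\mathbb{H}(\mathcal{N})+\mathbb{H}(\mathcal{M})$. *)

theory Defs
  imports Complex_Main
begin

text \<open>Matrices are represented as functions nat => nat => complex; the dimension
  is carried separately. A system of dimension n is C^n (n >= 1).\<close>

type_synonym cmat = "nat \<Rightarrow> nat \<Rightarrow> complex"

definition restr :: "nat \<Rightarrow> cmat \<Rightarrow> cmat" where
  "restr n A = (\<lambda>i j. if i < n \<and> j < n then A i j else 0)"

definition mtrace :: "nat \<Rightarrow> cmat \<Rightarrow> complex" where
  "mtrace n A = (\<Sum>i<n. A i i)"

definition idm :: "nat \<Rightarrow> cmat" where
  "idm n = (\<lambda>i j. if i < n \<and> j < n \<and> i = j then 1 else 0)"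

definition psd :: "nat \<Rightarrow> cmat \<Rightarrow> bool" where
  "psd n A \<longleftrightarrow> (\<forall>v :: nat \<Rightarrow> complex.
      (\<Sum>i<n. \<Sum>j<n. cnj (v i) * A i j * v j) \<in> \<real> \<and>
      0 \<le> Re (\<Sum>i<n. \<Sum>j<n. cnj (v i) * A i j * v j))"

definition density :: "nat \<Rightarrow> cmat \<Rightarrow> bool" where
  "density n A \<longleftrightarrow> psd n A \<and> mtrace n A = 1"

definition unif :: "nat \<Rightarrow> cmat" where
  "unif n = (\<lambda>i j. idm n i j / of_nat n)"

text \<open>Kronecker product P (x) Q, Q of dimension m; index of (x,y) is x*m+y.\<close>
definition kron :: "nat \<Rightarrow> cmat \<Rightarrow> cmat \<Rightarrow> cmat" where
  "kron m P Q = (\<lambda>x y. P (x div m) (y div m) * Q (x mod m) (y mod m))"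

definition unitmat :: "nat \<Rightarrow> nat \<Rightarrow> cmat" where
  "unitmat i j = (\<lambda>x y. if x = i \<and> y = j then 1 else 0)"

record channel =
  din :: nat
  dout :: nat
  act :: "cmat \<Rightarrow> cmat"

definition app :: "channel \<Rightarrow> cmat \<Rightarrow> cmat" where
  "app N X = restr (dout N) (act N (restr (din N) X))"

text \<open>(id_k (x) N)(X), ancilla first: index (a,i) is a*d+i.\<close>
definition idtensor :: "nat \<Rightarrow> channel \<Rightarrow> cmat \<Rightarrow> cmat" where
  "idtensor k N X = (\<lambda>x y. if x < k * dout N \<and> y < k * dout N then
      app N (\<lambda>i j. X (x div dout N * din N + i) (y div dout N * din N + j))
          (x mod dout N) (y mod dout N) else 0)"

definition is_linear_map :: "channel \<Rightarrow> bool" where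
  "is_linear_map N \<longleftrightarrow> (\<forall>(c::complex) X Y.
      app N (\<lambda>i j. c * X i j + Y i j) = (\<lambda>i j. c * app N X i j + app N Y i j))"

definition is_cp :: "channel \<Rightarrow> bool" where
  "is_cp N \<longleftrightarrow> (\<forall>k X. 1 \<le> k \<longrightarrow> psd (k * din N) X \<longrightarrow>
      psd (k * dout N) (idtensor k N X))"

definition is_tp :: "channel \<Rightarrow> bool" where
  "is_tp N \<longleftrightarrow> (\<forall>X. mtrace (dout N) (app N X) = mtrace (din N) X)"

definition is_channel :: "channel \<Rightarrow> bool" where
  "is_channel N \<longleftrightarrow> 1 \<le> din N \<and> 1 \<le> dout N \<and> is_linear_map N \<and> is_cp N \<and> is_tp N"

definition chan_eq :: "channel \<Rightarrow> channel \<Rightarrow> bool" where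
  "chan_eq N M \<longleftrightarrow> din N = din M \<and> dout N = dout M \<and> (\<forall>X. app N X = app M X)"

definition comp :: "channel \<Rightarrow> channel \<Rightarrow> channel" where
  "comp N M = \<lparr>din = din M, dout = dout N, act = (\<lambda>X. app N (app M X))\<rparr>"

text \<open>Tensor product N (x) M, N's systems first.\<close>
definition ctensor :: "channel \<Rightarrow> channel \<Rightarrow> channel" where
  "ctensor N M = \<lparr>din = din N * din M, dout = dout N * dout M,
     act = (\<lambda>X x y. \<Sum>i<din N. \<Sum>j<din N. \<Sum>k<din M. \<Sum>l<din M.
        X (i * din M + k) (j * din M + l) *
        kron (dout M) (app N (unitmat i j)) (app M (unitmat k l)) x y)\<rparr>"

definition is_isometry :: "nat \<Rightarrow> nat \<Rightarrow> cmat \<Rightarrow> bool" where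
  "is_isometry a b V \<longleftrightarrow> 1 \<le> a \<and> 1 \<le> b \<and>
     (\<forall>i<a. \<forall>j<a. (\<Sum>k<b. cnj (V k i) * V k j) = (if i = j then 1 else 0))"

definition iso_chan :: "nat \<Rightarrow> nat \<Rightarrow> cmat \<Rightarrow> channel" where
  "iso_chan a b V = \<lparr>din = a, dout = b,
     act = (\<lambda>X p q. \<Sum>i<a. \<Sum>j<a. V p i * X i j * cnj (V q j))\<rparr>"

text \<open>State rho on C^n as the channel C -> C^n, 1 |-> rho.\<close>
definition state_chan :: "nat \<Rightarrow> cmat \<Rightarrow> channel" where
  "state_chan n \<rho> = \<lparr>din = 1, dout = n, act = (\<lambda>X i j. X 0 0 * \<rho> i j)\<rparr>"

text \<open>Superchannel realization (r, V, E) from CPTP(A->B) to CPTP(A'->B):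
  Theta[N] = E o (id_R (x) N) o V with V : A' -> R A an isometry and E : R B -> B.\<close>
definition super :: "nat \<Rightarrow> nat \<Rightarrow> cmat \<Rightarrow> channel \<Rightarrow> channel \<Rightarrow> channel" where
  "super a' r V E N = \<lparr>din = a', dout = dout N,
     act = (\<lambda>X. app E (idtensor r N (app (iso_chan a' (r * din N) V) X)))\<rparr>"

definition is_realization :: "nat \<Rightarrow> nat \<Rightarrow> nat \<Rightarrow> nat \<Rightarrow> cmat \<Rightarrow> channel \<Rightarrow> bool" where
  "is_realization a b a' r V E \<longleftrightarrow> 1 \<le> r \<and> is_isometry a' (r * a) V \<and>
     is_channel E \<and> din E = r * b \<and> dout E = b"

definition same_super :: "nat \<Rightarrow> nat \<Rightarrow> nat \<Rightarrow> nat \<Rightarrow> cmat \<Rightarrow> channel \<Rightarrow>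
    nat \<Rightarrow> cmat \<Rightarrow> channel \<Rightarrow> bool" where
  "same_super a b a' r V E r' V' E' \<longleftrightarrow>
     (\<forall>N. is_channel N \<longrightarrow> din N = a \<longrightarrow> dout N = b \<longrightarrow>
        chan_eq (super a' r V E N) (super a' r' V' E' N))"

definition mixing_realization :: "nat \<Rightarrow> nat \<Rightarrow> nat \<Rightarrow> nat \<Rightarrow> cmat \<Rightarrow> channel \<Rightarrow> bool" where
  "mixing_realization a b a' r V E \<longleftrightarrow> is_realization a b a' r V E \<and>
     (\<forall>r' V' E'. is_realization a b a' r' V' E' \<longrightarrow> same_super a b a' r V E r' V' E' \<longrightarrow> r \<le> r') \<and>
     (\<forall>\<tau>. density r \<tau> \<longrightarrow> app E (kron b \<tau> (unif b)) = restr b (unif b))"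

definition maj_same :: "channel \<Rightarrow> channel \<Rightarrow> bool" where
  "maj_same N M \<longleftrightarrow> dout N = dout M \<and>
     (\<exists>r V E. mixing_realization (din N) (dout N) (din M) r V E \<and>
              chan_eq M (super (din M) r V E N))"

definition maj :: "channel \<Rightarrow> channel \<Rightarrow> bool" where
  "maj N M \<longleftrightarrow>
     (if dout N > dout M then
        (\<exists>U. is_isometry (dout M) (dout N) U \<and> maj_same N (comp (iso_chan (dout M) (dout N) U) M))
      else
        (\<exists>W. is_isometry (dout N) (dout M) W \<and> maj_same (comp (iso_chan (dout N) (dout M) W) N) M))"

end

theory Submission
  imports Defs
begin


lemma sum_split_mult:
  fixes f :: "nat \<Rightarrow> 'a::comm_monoid_add"
  shows "(\<Sum>x<k*m. f x) = (\<Sum>c<k. \<Sum>p<m. f (c*m+p))"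
proof -
  have "(\<Sum>x<k*m. f x) = (\<Sum>c<k. sum f {c*m..<c*m+m})"
    using sum.nat_group[of f m k] by simp
  also have "\<dots> = (\<Sum>c<k. \<Sum>p<m. f (c*m+p))"
  proof (rule sum.cong[OF refl])
    fix c
    show "sum f {c*m..<c*m+m} = (\<Sum>p<m. f (c*m+p))"
      using sum.shift_bounds_nat_ivl[of f 0 "c*m" m]
      by (simp add: atLeast0LessThan add.commute)
  qed
  finally show ?thesis .
qed

lemma quad_conj:
  fixes A :: cmat and X :: cmat and v :: "nat \<Rightarrow> complex"
  shows "(\<Sum>x<M. \<Sum>y<M. cnj (v x) * (\<Sum>i<N. \<Sum>j<N. A x i * X i j * cnj (A y j)) * v y)
       = (\<Sum>i<N. \<Sum>j<N. cnj (\<Sum>x<M. cnj (A x i) * v x) * X i j * (\<Sum>y<M. cnj (A y j) * v y))"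
proof -
  have "(\<Sum>x<M. \<Sum>y<M. cnj (v x) * (\<Sum>i<N. \<Sum>j<N. A x i * X i j * cnj (A y j)) * v y)
      = (\<Sum>x<M. \<Sum>y<M. \<Sum>i<N. \<Sum>j<N. cnj (v x) * A x i * X i j * cnj (A y j) * v y)"
    by (simp add: sum_distrib_left sum_distrib_right mult_ac)
  also have "\<dots> = (\<Sum>x<M. \<Sum>i<N. \<Sum>y<M. \<Sum>j<N. cnj (v x) * A x i * X i j * cnj (A y j) * v y)"
    by (rule sum.cong[OF refl], rule sum.swap)
  also have "\<dots> = (\<Sum>i<N. \<Sum>x<M. \<Sum>y<M. \<Sum>j<N. cnj (v x) * A x i * X i j * cnj (A y j) * v y)"
    by (rule sum.swap)
  also have "\<dots> = (\<Sum>i<N. \<Sum>x<M. \<Sum>j<N. \<Sum>y<M. cnj (v x) * A x i * X i j * cnj (A y j) * v y)"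
    by (rule sum.cong[OF refl], rule sum.cong[OF refl], rule sum.swap)
  also have "\<dots> = (\<Sum>i<N. \<Sum>j<N. \<Sum>x<M. \<Sum>y<M. cnj (v x) * A x i * X i j * cnj (A y j) * v y)"
    by (rule sum.cong[OF refl], rule sum.swap)
  also have "\<dots> = (\<Sum>i<N. \<Sum>j<N. cnj (\<Sum>x<M. cnj (A x i) * v x) * X i j * (\<Sum>y<M. cnj (A y j) * v y))"
    by (simp add: sum_distrib_left sum_distrib_right mult_ac)
  finally show ?thesis .
qed


lemma restr_restr[simp]: "restr n (restr n X) = restr n X"
  by (simp add: restr_def fun_eq_iff)

lemma app_eq_restr: "app N X = app N (restr (din N) X)"
  by (simp add: app_def)

lemma app_out: "\<not> (p < dout N \<and> q < dout N) \<Longrightarrow> app N X p q = 0"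
  by (auto simp: app_def restr_def)

lemma app_cong: "(\<And>i j. i < din N \<Longrightarrow> j < din N \<Longrightarrow> X i j = Y i j) \<Longrightarrow> app N X = app N Y"
proof -
  assume h: "\<And>i j. i < din N \<Longrightarrow> j < din N \<Longrightarrow> X i j = Y i j"
  have "restr (din N) X = restr (din N) Y" using h by (auto simp: restr_def fun_eq_iff)
  then show ?thesis by (metis app_eq_restr)
qed

definition kact :: "nat \<Rightarrow> 'e set \<Rightarrow> ('e \<Rightarrow> cmat) \<Rightarrow> cmat \<Rightarrow> cmat" where
  "kact n Es K X = (\<lambda>p q. \<Sum>e\<in>Es. \<Sum>i<n. \<Sum>j<n. K e p i * X i j * cnj (K e q j))"

definition kchan :: "nat \<Rightarrow> nat \<Rightarrow> 'e set \<Rightarrow> ('e \<Rightarrow> cmat) \<Rightarrow> channel" where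
  "kchan n m Es K = \<lparr>din = n, dout = m, act = kact n Es K\<rparr>"

lemma app_kchan: "app (kchan n m Es K) X = (\<lambda>p q. if p < m \<and> q < m then
   \<Sum>e\<in>Es. \<Sum>i<n. \<Sum>j<n. K e p i * X i j * cnj (K e q j) else 0)"
  unfolding app_def kchan_def kact_def restr_def by (auto simp: fun_eq_iff intro!: sum.cong)

lemma kchan_simps[simp]: "din (kchan n m Es K) = n" "dout (kchan n m Es K) = m"
  by (simp_all add: kchan_def)

lemma sum_block_delta:
  fixes g :: "nat \<Rightarrow> complex"
  assumes "d < k" "0 < n"
  shows "(\<Sum>i'<k*n. (if i' div n = d then h (i' mod n) else 0) * g i') = (\<Sum>i<n. h i * g (d*n+i))"
proof -
  have "(\<Sum>i'<k*n. (if i' div n = d then h (i' mod n) else 0) * g i')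
     = (\<Sum>c<k. \<Sum>i<n. (if (c*n+i) div n = d then h ((c*n+i) mod n) else 0) * g (c*n+i))"
    by (rule sum_split_mult)
  also have "\<dots> = (\<Sum>c<k. if c = d then (\<Sum>i<n. h i * g (c*n+i)) else 0)"
  proof (rule sum.cong[OF refl])
    fix c
    have e: "\<And>i. i < n \<Longrightarrow> (c*n+i) div n = c \<and> (c*n+i) mod n = i" using assms by simp
    show "(\<Sum>i<n. (if (c*n+i) div n = d then h ((c*n+i) mod n) else 0) * g (c*n+i))
        = (if c = d then (\<Sum>i<n. h i * g (c*n+i)) else 0)"
      by (cases "c = d") (auto simp: e intro!: sum.cong)
  qed
  also have "\<dots> = (\<Sum>i<n. h i * g (d*n+i))"
    using assms by simp
  finally show ?thesis .
qed

lemma psd_sum: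
  assumes "finite Es" "\<And>e. e \<in> Es \<Longrightarrow> Q e \<in> \<real> \<and> 0 \<le> Re (Q e)"
  shows "(\<Sum>e\<in>Es. Q e) \<in> \<real> \<and> 0 \<le> Re (\<Sum>e\<in>Es. Q e)"
  using assms by (auto simp: Re_sum intro!: sum_nonneg)

lemma kchan_cp:
  assumes fin: "finite Es" and n: "0 < n" and m: "0 < m"
  shows "is_cp (kchan n m Es K)"
  unfolding is_cp_def
proof (intro allI impI)
  fix k :: nat and X :: cmat
  assume k: "1 \<le> k" and psdX: "psd (k * din (kchan n m Es K)) X"
  define A where "A e x i' = (if i' div n = x div m then K e (x mod m) (i' mod n) else 0)" for e x i'
  have T: "idtensor k (kchan n m Es K) X x y =
      (\<Sum>e\<in>Es. \<Sum>i'<k*n. \<Sum>j'<k*n. A e x i' * X i' j' * cnj (A e y j'))"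
    if x: "x < k*m" and y: "y < k*m" for x y
  proof -
    have xd: "x div m < k" "y div m < k" using x y by (auto simp: less_mult_imp_div_less mult.commute)
    have "idtensor k (kchan n m Es K) X x y = (\<Sum>e\<in>Es. \<Sum>i<n. \<Sum>j<n.
       K e (x mod m) i * X (x div m * n + i) (y div m * n + j) * cnj (K e (y mod m) j))"
      using x y m by (simp add: idtensor_def app_kchan)
    also have "\<dots> = (\<Sum>e\<in>Es. \<Sum>i'<k*n. \<Sum>j'<k*n. A e x i' * X i' j' * cnj (A e y j'))"
    proof (rule sum.cong[OF refl])
      fix e
      have "(\<Sum>i'<k*n. \<Sum>j'<k*n. A e x i' * X i' j' * cnj (A e y j'))
         = (\<Sum>i'<k*n. A e x i' * (\<Sum>j'<k*n. X i' j' * cnj (A e y j')))"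
        by (simp add: sum_distrib_left mult_ac)
      also have "\<dots> = (\<Sum>i<n. K e (x mod m) i * (\<Sum>j'<k*n. X (x div m * n + i) j' * cnj (A e y j')))"
        unfolding A_def by (rule sum_block_delta[OF xd(1) n])
      also have "\<dots> = (\<Sum>i<n. K e (x mod m) i * (\<Sum>j<n. cnj (K e (y mod m) j) * X (x div m * n + i) (y div m * n + j)))"
      proof (rule sum.cong[OF refl])
        fix i
        have "(\<Sum>j'<k*n. X (x div m * n + i) j' * cnj (A e y j'))
            = (\<Sum>j'<k*n. (if j' div n = y div m then cnj (K e (y mod m) (j' mod n)) else 0) * X (x div m * n + i) j')"
          unfolding A_def by (auto intro!: sum.cong)
        also have "\<dots> = (\<Sum>j<n. cnj (K e (y mod m) j) * X (x div m * n + i) (y div m * n + j))"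
          by (rule sum_block_delta[OF xd(2) n])
        finally show "K e (x mod m) i * (\<Sum>j'<k*n. X (x div m * n + i) j' * cnj (A e y j')) =
          K e (x mod m) i * (\<Sum>j<n. cnj (K e (y mod m) j) * X (x div m * n + i) (y div m * n + j))" by simp
      qed
      also have "\<dots> = (\<Sum>i<n. \<Sum>j<n. K e (x mod m) i * X (x div m * n + i) (y div m * n + j) * cnj (K e (y mod m) j))"
        by (simp add: sum_distrib_left mult_ac)
      finally show "(\<Sum>i<n. \<Sum>j<n. K e (x mod m) i * X (x div m * n + i) (y div m * n + j) * cnj (K e (y mod m) j))
         = (\<Sum>i'<k*n. \<Sum>j'<k*n. A e x i' * X i' j' * cnj (A e y j'))" by simp
    qed
    finally show ?thesis .
  qed
  show "psd (k * dout (kchan n m Es K)) (idtensor k (kchan n m Es K) X)"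
    unfolding psd_def
  proof
    fix v :: "nat \<Rightarrow> complex"
    have "(\<Sum>x<k*m. \<Sum>y<k*m. cnj (v x) * idtensor k (kchan n m Es K) X x y * v y)
       = (\<Sum>x<k*m. \<Sum>y<k*m. cnj (v x) * (\<Sum>e\<in>Es. \<Sum>i'<k*n. \<Sum>j'<k*n. A e x i' * X i' j' * cnj (A e y j')) * v y)"
      by (simp add: T)
    also have "\<dots> = (\<Sum>e\<in>Es. \<Sum>x<k*m. \<Sum>y<k*m. cnj (v x) * (\<Sum>i'<k*n. \<Sum>j'<k*n. A e x i' * X i' j' * cnj (A e y j')) * v y)"
      by (simp add: sum_distrib_left sum_distrib_right sum.swap[of _ Es])
    also have "\<dots> = (\<Sum>e\<in>Es. \<Sum>i'<k*n. \<Sum>j'<k*n. cnj (\<Sum>x<k*m. cnj (A e x i') * v x) * X i' j' * (\<Sum>y<k*m. cnj (A e y j') * v y))"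
      by (simp add: quad_conj)
    finally have eq: "(\<Sum>x<k*m. \<Sum>y<k*m. cnj (v x) * idtensor k (kchan n m Es K) X x y * v y) = \<dots>" .
    have pe: "\<And>e. (\<Sum>i'<k*n. \<Sum>j'<k*n. cnj (\<Sum>x<k*m. cnj (A e x i') * v x) * X i' j' * (\<Sum>y<k*m. cnj (A e y j') * v y)) \<in> \<real> \<and>
       0 \<le> Re (\<Sum>i'<k*n. \<Sum>j'<k*n. cnj (\<Sum>x<k*m. cnj (A e x i') * v x) * X i' j' * (\<Sum>y<k*m. cnj (A e y j') * v y))"
    proof -
      fix e
      have pX: "\<And>w. (\<Sum>i<k*n. \<Sum>j<k*n. cnj (w i) * X i j * w j) \<in> \<real> \<and> 0 \<le> Re (\<Sum>i<k*n. \<Sum>j<k*n. cnj (w i) * X i j * w j)"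
        using psdX unfolding psd_def kchan_simps by blast
      show "?thesis e" by (rule pX)
    qed
    show "(\<Sum>i<k * dout (kchan n m Es K). \<Sum>j<k * dout (kchan n m Es K). cnj (v i) * idtensor k (kchan n m Es K) X i j * v j) \<in> \<real> \<and>
        0 \<le> Re (\<Sum>i<k * dout (kchan n m Es K). \<Sum>j<k * dout (kchan n m Es K). cnj (v i) * idtensor k (kchan n m Es K) X i j * v j)"
      unfolding kchan_simps eq by (rule psd_sum[OF fin pe])
  qed
qed


lemma kchan_linear: "is_linear_map (kchan n m Es K)"
  unfolding is_linear_map_def
  by (simp add: app_kchan fun_eq_iff sum.distrib sum_distrib_left algebra_simps)

lemma kchan_tp:
  assumes tpc: "\<And>i j. i < n \<Longrightarrow> j < n \<Longrightarrow> (\<Sum>e\<in>Es. \<Sum>p<m. K e p i * cnj (K e p j)) = (if i = j then 1 else 0)"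
  shows "is_tp (kchan n m Es K)"
  unfolding is_tp_def
proof
  fix X
  have "mtrace (dout (kchan n m Es K)) (app (kchan n m Es K) X)
     = (\<Sum>p<m. \<Sum>e\<in>Es. \<Sum>i<n. \<Sum>j<n. K e p i * X i j * cnj (K e p j))"
    by (simp add: mtrace_def app_kchan)
  also have "\<dots> = (\<Sum>e\<in>Es. \<Sum>p<m. \<Sum>i<n. \<Sum>j<n. K e p i * X i j * cnj (K e p j))"
    by (rule sum.swap)
  also have "\<dots> = (\<Sum>e\<in>Es. \<Sum>i<n. \<Sum>p<m. \<Sum>j<n. K e p i * X i j * cnj (K e p j))"
    by (rule sum.cong[OF refl], rule sum.swap)
  also have "\<dots> = (\<Sum>e\<in>Es. \<Sum>i<n. \<Sum>j<n. \<Sum>p<m. K e p i * X i j * cnj (K e p j))"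
    by (rule sum.cong[OF refl], rule sum.cong[OF refl], rule sum.swap)
  also have "\<dots> = (\<Sum>i<n. \<Sum>e\<in>Es. \<Sum>j<n. \<Sum>p<m. K e p i * X i j * cnj (K e p j))"
    by (rule sum.swap)
  also have "\<dots> = (\<Sum>i<n. \<Sum>j<n. \<Sum>e\<in>Es. \<Sum>p<m. K e p i * X i j * cnj (K e p j))"
    by (rule sum.cong[OF refl], rule sum.swap)
  also have "\<dots> = (\<Sum>i<n. \<Sum>j<n. X i j * (\<Sum>e\<in>Es. \<Sum>p<m. K e p i * cnj (K e p j)))"
    by (simp add: sum_distrib_left mult_ac)
  also have "\<dots> = (\<Sum>i<n. \<Sum>j<n. X i j * (if i = j then 1 else 0))"
    by (simp add: tpc)
  also have "\<dots> = mtrace (din (kchan n m Es K)) X"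
    by (simp add: mtrace_def if_distrib cong: if_cong)
  finally show "mtrace (dout (kchan n m Es K)) (app (kchan n m Es K) X) = mtrace (din (kchan n m Es K)) X" .
qed

lemma kchan_channel:
  assumes "finite Es" "1 \<le> n" "1 \<le> m"
    "\<And>i j. i < n \<Longrightarrow> j < n \<Longrightarrow> (\<Sum>e\<in>Es. \<Sum>p<m. K e p i * cnj (K e p j)) = (if i = j then 1 else 0)"
  shows "is_channel (kchan n m Es K)"
  using assms kchan_cp[where Es=Es and n=n and m=m and K=K] kchan_linear kchan_tp[where Es=Es and n=n and m=m and K=K]
  unfolding is_channel_def by simp




lemma restr_app[simp]: "restr (dout N) (app N X) = app N X"
  by (simp add: app_def)

lemma app_restr_arg[simp]: "app N (restr (din N) X) = app N X"
  by (metis app_eq_restr)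

lemma chan_eq_refl: "chan_eq N N" by (simp add: chan_eq_def)
lemma chan_eq_sym: "chan_eq N M \<Longrightarrow> chan_eq M N" by (simp add: chan_eq_def)
lemma chan_eq_trans: "chan_eq N M \<Longrightarrow> chan_eq M L \<Longrightarrow> chan_eq N L" by (simp add: chan_eq_def)

lemma chan_eq_app: "chan_eq N M \<Longrightarrow> app N = app M"
  by (auto simp: chan_eq_def)

lemma chan_eq_idtensor: "chan_eq N M \<Longrightarrow> idtensor k N = idtensor k M"
  unfolding idtensor_def by (auto simp: chan_eq_def fun_eq_iff)

lemma chan_eq_channel: "chan_eq N M \<Longrightarrow> is_channel N \<Longrightarrow> is_channel M"
proof -
  assume e: "chan_eq N M" and c: "is_channel N"
  have d: "din N = din M" "dout N = dout M" using e by (auto simp: chan_eq_def)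
  have a: "app N = app M" by (rule chan_eq_app[OF e])
  have i: "\<And>k. idtensor k N = idtensor k M" by (rule chan_eq_idtensor[OF e])
  show ?thesis using c unfolding is_channel_def is_linear_map_def is_cp_def is_tp_def
    by (simp add: d a i)
qed

lemma app_comp: "app (comp A B) X = app A (app B X)"
  by (simp add: comp_def app_def)

lemma comp_simps[simp]: "din (comp A B) = din B" "dout (comp A B) = dout A"
  by (simp_all add: comp_def)

lemma idtensor_comp:
  assumes "din A = dout B" "0 < dout B"
  shows "idtensor k (comp A B) X = idtensor k A (idtensor k B X)"
proof (rule ext, rule ext)
  fix x y
  show "idtensor k (comp A B) X x y = idtensor k A (idtensor k B X) x y"
  proof (cases "x < k * dout A \<and> y < k * dout A")
    case True
    then have xd: "x div dout A < k" "y div dout A < k"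
      by (auto simp: less_mult_imp_div_less mult.commute)
    have eq: "app A (\<lambda>i j. idtensor k B X (x div dout A * din A + i) (y div dout A * din A + j))
        = app A (app B (\<lambda>i j. X (x div dout A * din B + i) (y div dout A * din B + j)))"
    proof (rule app_cong)
      fix i j assume i: "i < din A" and j: "j < din A"
      have lt: "x div dout A * dout B + i < k * dout B" "y div dout A * dout B + j < k * dout B"
      proof -
        have "x div dout A * dout B + i < (x div dout A + 1) * dout B" using i assms by simp
        also have "\<dots> \<le> k * dout B" using xd by (intro mult_right_mono) auto
        finally show "x div dout A * dout B + i < k * dout B" .
        have "y div dout A * dout B + j < (y div dout A + 1) * dout B" using j assms by simp
        also have "\<dots> \<le> k * dout B" using xd by (intro mult_right_mono) auto
        finally show "y div dout A * dout B + j < k * dout B" .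
      qed
      show "idtensor k B X (x div dout A * din A + i) (y div dout A * din A + j) =
         app B (\<lambda>i j. X (x div dout A * din B + i) (y div dout A * din B + j)) i j"
        using lt i j assms by (simp add: idtensor_def)
    qed
    have L: "idtensor k (comp A B) X x y = app A (app B (\<lambda>i j. X (x div dout A * din B + i) (y div dout A * din B + j))) (x mod dout A) (y mod dout A)"
      using True by (simp add: idtensor_def app_comp)
    have R: "idtensor k A (idtensor k B X) x y = app A (\<lambda>i j. idtensor k B X (x div dout A * din A + i) (y div dout A * din A + j)) (x mod dout A) (y mod dout A)"
      unfolding idtensor_def[of k A] using True by simp
    show ?thesis using L R eq by simp
  next
    case False
    then show ?thesis by (auto simp: idtensor_def)
  qed
qed

lemma comp_channel:
  assumes cA: "is_channel A" and cB: "is_channel B" and d: "din A = dout B"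
  shows "is_channel (comp A B)"
proof -
  have pos: "0 < dout B" using cB by (simp add: is_channel_def)
  have lin: "is_linear_map (comp A B)"
    unfolding is_linear_map_def
  proof (intro allI)
    fix c X Y
    have "app B (\<lambda>i j. c * X i j + Y i j) = (\<lambda>i j. c * app B X i j + app B Y i j)"
      using cB by (simp add: is_channel_def is_linear_map_def)
    moreover have "app A (\<lambda>i j. c * app B X i j + app B Y i j) = (\<lambda>i j. c * app A (app B X) i j + app A (app B Y) i j)"
      using cA by (simp add: is_channel_def is_linear_map_def)
    ultimately show "app (comp A B) (\<lambda>i j. c * X i j + Y i j) = (\<lambda>i j. c * app (comp A B) X i j + app (comp A B) Y i j)"
      by (simp add: app_comp)
  qed
  have tp: "is_tp (comp A B)"
    using cA cB d by (simp add: is_channel_def is_tp_def app_comp)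
  have cp: "is_cp (comp A B)"
    unfolding is_cp_def
  proof (intro allI impI)
    fix k X assume k: "1 \<le> k" and p: "psd (k * din (comp A B)) X"
    have "psd (k * dout B) (idtensor k B X)" using cB k p by (simp add: is_channel_def is_cp_def)
    then have "psd (k * dout A) (idtensor k A (idtensor k B X))"
      using cA k d by (simp add: is_channel_def is_cp_def)
    then show "psd (k * dout (comp A B)) (idtensor k (comp A B) X)"
      by (simp add: idtensor_comp[OF d pos])
  qed
  show ?thesis using cA cB lin tp cp by (simp add: is_channel_def)
qed




definition amp :: "nat \<Rightarrow> channel \<Rightarrow> channel" where
  "amp k N = \<lparr>din = k * din N, dout = k * dout N, act = idtensor k N\<rparr>"

lemma amp_simps[simp]: "din (amp k N) = k * din N" "dout (amp k N) = k * dout N"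
  by (simp_all add: amp_def)

lemma div_lt_aux: "x < k * d \<Longrightarrow> x div d < (k::nat)"
  by (auto simp: less_mult_imp_div_less mult.commute)

lemma blk_lt: "c < k \<Longrightarrow> i < d \<Longrightarrow> c * d + i < k * (d::nat)"
proof -
  assume "c < k" "i < d"
  then have "c * d + i < (c+1) * d" by simp
  also have "\<dots> \<le> k * d" using \<open>c < k\<close> by (intro mult_right_mono) auto
  finally show ?thesis .
qed

lemma app_amp: "app (amp k N) X = idtensor k N X"
proof (rule ext, rule ext)
  fix x y
  show "app (amp k N) X x y = idtensor k N X x y"
  proof (cases "x < k * dout N \<and> y < k * dout N")
    case True
    have "app N (\<lambda>i j. restr (k * din N) X (x div dout N * din N + i) (y div dout N * din N + j))
       = app N (\<lambda>i j. X (x div dout N * din N + i) (y div dout N * din N + j))"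
      by (rule app_cong) (use True in \<open>auto simp: restr_def intro!: blk_lt div_lt_aux\<close>)
    moreover have "app (amp k N) X x y = restr (k*dout N) (idtensor k N (restr (k*din N) X)) x y"
      by (simp add: app_def amp_def)
    ultimately show ?thesis using True by (simp add: idtensor_def restr_def)
  next
    case False then show ?thesis by (auto simp: app_def restr_def idtensor_def amp_def)
  qed
qed

lemma idx_aux:
  fixes x d k e :: nat
  assumes "0 < d"
  shows "x div (k*d) * (k*e) + (x mod (k*d)) div d * e = (x div d) * e"
proof -
  have m: "x mod (d*k) = d * (x div d mod k) + x mod d" by (rule mod_mult2_eq)
  have "(x mod (k*d)) div d = x div d mod k" using m assms by (simp add: mult.commute)
  moreover have "x div (k*d) = x div d div k" by (simp add: div_mult2_eq mult.commute)
  ultimately have "x div (k*d) * k + (x mod (k*d)) div d = x div d" by simp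
  then show ?thesis by (metis add_mult_distrib mult.assoc)
qed

lemma idtensor_amp:
  assumes "0 < dout N"
  shows "idtensor m (amp k N) X = idtensor (m*k) N X"
proof (rule ext, rule ext)
  fix x y
  show "idtensor m (amp k N) X x y = idtensor (m*k) N X x y"
  proof (cases "x < m * (k * dout N) \<and> y < m * (k * dout N)")
    case True
    have k: "0 < k" using True by (cases k) auto
    have a: "x mod (k * dout N) < k * dout N" "y mod (k * dout N) < k * dout N"
      using k assms by auto
    have mm: "x mod (k * dout N) mod dout N = x mod dout N" "y mod (k * dout N) mod dout N = y mod dout N"
      by (simp_all add: mod_mod_cancel)
    have ii: "x div (k * dout N) * (k * din N) + x mod (k * dout N) div dout N * din N = x div dout N * din N"
      "y div (k * dout N) * (k * din N) + y mod (k * dout N) div dout N * din N = y div dout N * din N"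
      using idx_aux[OF assms] by auto
    show ?thesis using True a
      by (simp add: idtensor_def[of m] app_amp idtensor_def[of k] idtensor_def[of "m*k"] mm add.assoc[symmetric] ii mult.assoc)
  next
    case False then show ?thesis by (auto simp: idtensor_def mult.assoc)
  qed
qed

lemma amp_channel:
  assumes c: "is_channel N" and k: "1 \<le> k"
  shows "is_channel (amp k N)"
proof -
  have pd: "0 < din N" "0 < dout N" using c by (auto simp: is_channel_def)
  have linN: "\<And>c X Y. app N (\<lambda>i j. c * X i j + Y i j) = (\<lambda>i j. c * app N X i j + app N Y i j)"
    using c by (simp add: is_channel_def is_linear_map_def)
  have lin: "is_linear_map (amp k N)"
    unfolding is_linear_map_def app_amp
  proof (intro allI)
    fix cc X Y
    show "idtensor k N (\<lambda>i j. cc * X i j + Y i j) = (\<lambda>i j. cc * idtensor k N X i j + idtensor k N Y i j)"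
      unfolding idtensor_def by (auto simp: fun_eq_iff linN)
  qed
  have tpN: "\<And>X. mtrace (dout N) (app N X) = mtrace (din N) X"
    using c by (simp add: is_channel_def is_tp_def)
  have tp: "is_tp (amp k N)"
    unfolding is_tp_def
  proof
    fix X
    have "mtrace (dout (amp k N)) (app (amp k N) X) = (\<Sum>x<k * dout N. idtensor k N X x x)"
      by (simp add: mtrace_def app_amp)
    also have "\<dots> = (\<Sum>c<k. \<Sum>p<dout N. idtensor k N X (c * dout N + p) (c * dout N + p))"
      by (rule sum_split_mult)
    also have "\<dots> = (\<Sum>c<k. mtrace (dout N) (app N (\<lambda>i j. X (c * din N + i) (c * din N + j))))"
      using pd by (auto simp: mtrace_def idtensor_def blk_lt intro!: sum.cong)
    also have "\<dots> = (\<Sum>c<k. mtrace (din N) (\<lambda>i j. X (c * din N + i) (c * din N + j)))"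
      by (simp only: tpN)
    also have "\<dots> = (\<Sum>c<k. \<Sum>i<din N. X (c * din N + i) (c * din N + i))"
      by (simp add: mtrace_def)
    also have "\<dots> = mtrace (din (amp k N)) X"
      by (simp add: mtrace_def sum_split_mult)
    finally show "mtrace (dout (amp k N)) (app (amp k N) X) = mtrace (din (amp k N)) X" .
  qed
  have cp: "is_cp (amp k N)"
    unfolding is_cp_def
  proof (intro allI impI)
    fix m X assume m: "1 \<le> m" and p: "psd (m * din (amp k N)) X"
    have cpN: "\<And>k X. 1 \<le> k \<Longrightarrow> psd (k*din N) X \<Longrightarrow> psd (k*dout N) (idtensor k N X)"
      using c by (simp add: is_channel_def is_cp_def)
    have mk: "1 \<le> m * k" using m k by simp
    have "psd ((m * k) * din N) X" using p by (simp add: mult.assoc)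
    then have "psd ((m * k) * dout N) (idtensor (m*k) N X)" by (rule cpN[OF mk])
    then show "psd (m * dout (amp k N)) (idtensor m (amp k N) X)"
      by (simp add: idtensor_amp[OF pd(2)] mult.assoc)
  qed
  show ?thesis using c k lin tp cp by (auto simp: is_channel_def)
qed




lemma lin_zero:
  assumes "is_linear_map N"
  shows "app N (\<lambda>i j. 0) = (\<lambda>i j. 0)"
proof -
  have l: "\<forall>c X Y. app N (\<lambda>i j. c * X i j + Y i j) = (\<lambda>i j. c * app N X i j + app N Y i j)"
    using assms unfolding is_linear_map_def .
  have "app N (\<lambda>i j. 1 * 0 + 0) = (\<lambda>i j. 1 * app N (\<lambda>i j. 0) i j + app N (\<lambda>i j. 0) i j)"
    using l[rule_format, of 1 "\<lambda>i j. 0" "\<lambda>i j. 0"] by simp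
  then have "\<And>i j. app N (\<lambda>i j. 0) i j = app N (\<lambda>i j. 0) i j + app N (\<lambda>i j. 0) i j"
    by (simp add: fun_eq_iff)
  then show ?thesis by (simp add: fun_eq_iff)
qed

lemma lin_sum:
  assumes lin: "is_linear_map N" and fin: "finite F"
  shows "app N (\<lambda>i j. \<Sum>e\<in>F. c e * Y e i j) = (\<lambda>p q. \<Sum>e\<in>F. c e * app N (Y e) p q)"
  using fin
proof (induction F rule: finite_induct)
  case empty
  then show ?case using lin_zero[OF lin] by simp
next
  case (insert x F)
  have "app N (\<lambda>i j. \<Sum>e\<in>insert x F. c e * Y e i j) = app N (\<lambda>i j. c x * Y x i j + (\<Sum>e\<in>F. c e * Y e i j))"
    using insert by simp
  also have "\<dots> = (\<lambda>p q. c x * app N (Y x) p q + app N (\<lambda>i j. \<Sum>e\<in>F. c e * Y e i j) p q)"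
  proof -
    have l: "\<forall>c X Y. app N (\<lambda>i j. c * X i j + Y i j) = (\<lambda>i j. c * app N X i j + app N Y i j)"
      using lin unfolding is_linear_map_def .
    show ?thesis using l[rule_format, of "c x" "Y x" "\<lambda>i j. \<Sum>e\<in>F. c e * Y e i j"] by simp
  qed
  also have "\<dots> = (\<lambda>p q. \<Sum>e\<in>insert x F. c e * app N (Y e) p q)"
    using insert by (simp add: fun_eq_iff)
  finally show ?case .
qed

lemma restr_expand:
  "restr d X = (\<lambda>i j. \<Sum>e\<in>{..<d}\<times>{..<d}. X (fst e) (snd e) * unitmat (fst e) (snd e) i j)"
proof (rule ext, rule ext)
  fix i j
  have "(\<Sum>e\<in>{..<d}\<times>{..<d}. X (fst e) (snd e) * unitmat (fst e) (snd e) i j)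
      = (\<Sum>e\<in>{..<d}\<times>{..<d}. if e = (i, j) then X i j else 0)"
    by (rule sum.cong) (auto simp: unitmat_def)
  also have "\<dots> = restr d X i j"
    by (simp add: restr_def)
  finally show "restr d X i j = (\<Sum>e\<in>{..<d}\<times>{..<d}. X (fst e) (snd e) * unitmat (fst e) (snd e) i j)" by simp
qed

lemma app_expand:
  assumes lin: "is_linear_map N"
  shows "app N X = (\<lambda>p q. \<Sum>i<din N. \<Sum>j<din N. X i j * app N (unitmat i j) p q)"
proof -
  have "app N X = app N (restr (din N) X)" by simp
  also have "\<dots> = (\<lambda>p q. \<Sum>e\<in>{..<din N}\<times>{..<din N}. X (fst e) (snd e) * app N (unitmat (fst e) (snd e)) p q)"
    unfolding restr_expand
    by (rule lin_sum[OF lin, of _ "\<lambda>e. X (fst e) (snd e)" "\<lambda>e. unitmat (fst e) (snd e)"]) simp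
  also have "\<dots> = (\<lambda>p q. \<Sum>i<din N. \<Sum>j<din N. X i j * app N (unitmat i j) p q)"
    by (simp add: sum.cartesian_product case_prod_beta)
  finally show ?thesis .
qed

lemma idtensor_1:
  assumes "0 < dout N"
  shows "idtensor 1 N Y = app N Y"
proof (rule ext, rule ext)
  fix x y
  show "idtensor 1 N Y x y = app N Y x y"
    using assms by (cases "x < dout N \<and> y < dout N") (auto simp: idtensor_def app_out)
qed

lemma super_simps[simp]: "din (super a' r V E N) = a'" "dout (super a' r V E N) = dout N"
  by (simp_all add: super_def)

lemma app_super:
  assumes "dout E = dout N"
  shows "app (super a' r V E N) X = app E (idtensor r N (app (iso_chan a' (r * din N) V) X))"
proof -
  have "app (super a' r V E N) X = restr (dout N) (app E (idtensor r N (app (iso_chan a' (r * din N) V) (restr a' X))))"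
    unfolding app_def[of "super a' r V E N"] by (simp add: super_def)
  also have "\<dots> = app E (idtensor r N (app (iso_chan a' (r * din N) V) (restr a' X)))"
    using restr_app[of E] assms by simp
  also have "app (iso_chan a' (r * din N) V) (restr a' X) = app (iso_chan a' (r * din N) V) X"
    using app_restr_arg[of "iso_chan a' (r * din N) V" X] by (simp add: iso_chan_def)
  finally show ?thesis .
qed

lemma iso_chan_kchan: "iso_chan a b V = kchan a b {()} (\<lambda>_. V)"
  by (simp add: iso_chan_def kchan_def kact_def fun_eq_iff)



lemma iso_simps[simp]: "din (iso_chan a b V) = a" "dout (iso_chan a b V) = b"
  by (simp_all add: iso_chan_def)

lemma iso_channel:
  assumes "is_isometry a b V"
  shows "is_channel (iso_chan a b V)"
  unfolding iso_chan_kchan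
proof (rule kchan_channel)
  show "finite {()}" by simp
  show "1 \<le> a" "1 \<le> b" using assms by (auto simp: is_isometry_def)
  fix i j assume "i < a" "j < a"
  then have "(\<Sum>k<b. cnj (V k i) * V k j) = (if i = j then 1 else 0)"
    using assms by (auto simp: is_isometry_def)
  then have "cnj (\<Sum>k<b. cnj (V k i) * V k j) = (if i = j then 1 else 0)" by simp
  then show "(\<Sum>e\<in>{()}. \<Sum>p<b. V p i * cnj (V p j)) = (if i = j then 1 else 0)"
    by (simp add: mult.commute)
qed

lemma app_iso: "app (iso_chan a b V) X = (\<lambda>p q. if p < b \<and> q < b then \<Sum>i<a. \<Sum>j<a. V p i * X i j * cnj (V q j) else 0)"
  by (simp add: iso_chan_kchan app_kchan cong: if_cong)

definition embm :: "nat \<Rightarrow> cmat" where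
  "embm a = (\<lambda>p i. if p = i \<and> i < a then 1 else 0)"

lemma embm_iso: "1 \<le> a \<Longrightarrow> a \<le> b \<Longrightarrow> is_isometry a b (embm a)"
  unfolding is_isometry_def embm_def
proof (intro conjI allI impI)
  fix i j assume a: "1 \<le> a" "a \<le> b" and i: "i < a" and j: "j < a"
  have "(\<Sum>k<b. cnj (if k = i \<and> i < a then 1 else 0) * (if k = j \<and> j < a then 1 else 0))
     = (\<Sum>k<b. if k = i then (if i = j then 1 else 0) else 0)"
    by (rule sum.cong) (use i j in auto)
  also have "\<dots> = (if i = j then 1 else 0)" using i a by simp
  finally show "(\<Sum>k<b. cnj (if k = i \<and> i < a then 1 else 0) * (if k = j \<and> j < a then 1 else 0)) = (if i = j then 1 else 0)" .
qed auto

lemma app_embm: "app (iso_chan a b (embm a)) X = (\<lambda>p q. if p < b \<and> q < b \<and> p < a \<and> q < a then X p q else 0)"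
proof (rule ext, rule ext)
  fix p q
  show "app (iso_chan a b (embm a)) X p q = (if p < b \<and> q < b \<and> p < a \<and> q < a then X p q else 0)"
  proof (cases "p < b \<and> q < b \<and> p < a \<and> q < a")
    case True
    have "(\<Sum>i<a. \<Sum>j<a. embm a p i * X i j * cnj (embm a q j)) = (\<Sum>i<a. if i = p then X p q else 0)"
    proof (rule sum.cong[OF refl])
      fix i assume "i \<in> {..<a}"
      have "(\<Sum>j<a. embm a p i * X i j * cnj (embm a q j)) = (\<Sum>j<a. if j = q then (if i = p then X p q else 0) else 0)"
        by (rule sum.cong) (use True in \<open>auto simp: embm_def\<close>)
      also have "\<dots> = (if i = p then X p q else 0)" using True by simp
      finally show "(\<Sum>j<a. embm a p i * X i j * cnj (embm a q j)) = (if i = p then X p q else 0)" .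
    qed
    then show ?thesis using True by (simp add: app_iso)
  next
    case False
    show ?thesis
    proof (cases "p < b \<and> q < b")
      case True
      then have na: "\<not> (p < a \<and> q < a)" using False by simp
      then have "\<And>i j. i < a \<Longrightarrow> j < a \<Longrightarrow> embm a p i * X i j * cnj (embm a q j) = 0"
        by (auto simp: embm_def)
      then show ?thesis using True na by (auto simp: app_iso intro!: sum.neutral)
    next
      case False then show ?thesis by (auto simp: app_iso)
    qed
  qed
qed




lemma ifz_mult_l: "(if P then a else 0) * (b::'a::mult_zero) = (if P then a * b else 0)" by simp
lemma ifz_mult_r: "(b::'a::mult_zero) * (if P then a else 0) = (if P then b * a else 0)" by simp
lemma cnj_ifz: "cnj (if P then a else 0) = (if P then cnj a else 0)" by simp
lemma ifz_conj: "(if P \<and> Q then a else (0::'a::zero)) = (if P then (if Q then a else 0) else 0)" by simp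
lemma sum_ifz_out: "(\<Sum>x\<in>A. if P then f x else 0) = (if P then (\<Sum>x\<in>A. f x) else 0)" by simp
lemma lt1: "{..<(1::nat)} = {0}" by auto
lemma lt1': "{..<Suc 0} = {0}" by auto
lemmas dsimps = ifz_mult_l ifz_mult_r cnj_ifz ifz_conj sum_ifz_out lt1 lt1'

definition csq :: "nat \<Rightarrow> complex" where
  "csq n = complex_of_real (1 / sqrt (real n))"

lemma csq_sq: "0 < n \<Longrightarrow> csq n * cnj (csq n) = 1 / of_nat n"
proof -
  assume n: "0 < n"
  have "csq n * cnj (csq n) = complex_of_real (1 / sqrt (real n)) * complex_of_real (1 / sqrt (real n))"
    by (simp only: csq_def complex_cnj_complex_of_real)
  also have "\<dots> = complex_of_real ((1 / sqrt (real n)) * (1 / sqrt (real n)))"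
    by (simp only: of_real_mult)
  also have "(1 / sqrt (real n)) * (1 / sqrt (real n)) = 1 / real n"
    using n by (simp add: real_sqrt_mult[symmetric])
  finally show ?thesis by simp
qed

lemma unif_eq: "unif n p q = (if p < n \<and> q < n \<and> p = q then 1 / of_nat n else 0)"
  by (simp add: unif_def idm_def)

definition Ustate :: "nat \<Rightarrow> channel" where
  "Ustate n = kchan 1 n {..<n} (\<lambda>e p i. if p = e \<and> i = 0 then csq n else 0)"

lemma Ustate_simps[simp]: "din (Ustate n) = 1" "dout (Ustate n) = n"
  by (simp_all add: Ustate_def)

lemma app_Ustate: "0 < n \<Longrightarrow> app (Ustate n) X = (\<lambda>p q. X 0 0 * unif n p q)"
proof (rule ext, rule ext)
  fix p q assume n: "0 < n"
  show "app (Ustate n) X p q = X 0 0 * unif n p q"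
  proof (cases "p < n \<and> q < n")
    case True
    have "(\<Sum>e<n. (if p = e then csq n else 0) * X 0 0 * cnj (if q = e then csq n else 0))
        = (\<Sum>e<n. if e = p then (if p = q then X 0 0 * (csq n * cnj (csq n)) else 0) else 0)"
      by (rule sum.cong) (auto simp: mult_ac)
    also have "\<dots> = X 0 0 * unif n p q" using True n by (simp add: csq_sq unif_eq)
    finally show ?thesis using True by (simp add: Ustate_def app_kchan)
  next
    case False then show ?thesis by (auto simp: Ustate_def app_kchan unif_eq)
  qed
qed

lemma Ustate_channel: "1 \<le> n \<Longrightarrow> is_channel (Ustate n)"
  unfolding Ustate_def
proof (rule kchan_channel)
  assume n: "1 \<le> n"
  show "finite {..<n}" "1 \<le> (1::nat)" "1 \<le> n" using n by auto
  fix i j :: nat assume "i < 1" "j < 1"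
  then have ij: "i = 0" "j = 0" by auto
  have "(\<Sum>e<n. \<Sum>p<n. (if p = e \<and> i = 0 then csq n else 0) * cnj (if p = e \<and> j = 0 then csq n else 0))
     = (\<Sum>e<n. csq n * cnj (csq n))"
  proof (rule sum.cong[OF refl])
    fix e assume "e \<in> {..<n}"
    then show "(\<Sum>p<n. (if p = e \<and> i = 0 then csq n else 0) * cnj (if p = e \<and> j = 0 then csq n else 0)) = csq n * cnj (csq n)"
      using ij by (simp add: if_distrib cong: if_cong)
  qed
  also have "\<dots> = 1" using n by (simp add: csq_sq)
  finally show "(\<Sum>e<n. \<Sum>p<n. (if p = e \<and> i = 0 then csq n else 0) * cnj (if p = e \<and> j = 0 then csq n else 0)) = (if i = j then 1 else 0)"
    using ij by simp
qed

lemma app_state: "app (state_chan n \<rho>) X = (\<lambda>p q. if p < n \<and> q < n then X 0 0 * \<rho> p q else 0)"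
  by (simp add: app_def state_chan_def restr_def fun_eq_iff)

lemma state_simps[simp]: "din (state_chan n \<rho>) = 1" "dout (state_chan n \<rho>) = n"
  by (simp_all add: state_chan_def)

lemma state_unif_eq: "0 < n \<Longrightarrow> chan_eq (state_chan n (unif n)) (Ustate n)"
  by (auto simp: chan_eq_def app_state app_Ustate fun_eq_iff unif_eq)

lemma state_unif_channel: "1 \<le> n \<Longrightarrow> is_channel (state_chan n (unif n))"
  by (rule chan_eq_channel[OF chan_eq_sym[OF state_unif_eq] Ustate_channel]) auto

definition trch :: "nat \<Rightarrow> channel" where
  "trch a = kchan a 1 {..<a} (\<lambda>e p i. if p = 0 \<and> i = e then 1 else 0)"

lemma trch_simps[simp]: "din (trch a) = a" "dout (trch a) = 1"
  by (simp_all add: trch_def)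

lemma app_trch: "app (trch a) X = (\<lambda>p q. if p < 1 \<and> q < 1 then mtrace a X else 0)"
proof (rule ext, rule ext)
  fix p q
  show "app (trch a) X p q = (if p < 1 \<and> q < 1 then mtrace a X else 0)"
  proof (cases "p < 1 \<and> q < 1")
    case True
    have "(\<Sum>e<a. \<Sum>i<a. \<Sum>j<a. (if p = 0 \<and> i = e then 1 else 0) * X i j * cnj (if q = 0 \<and> j = e then 1 else 0))
        = (\<Sum>e<a. X e e)"
    proof (rule sum.cong[OF refl])
      fix e assume e: "e \<in> {..<a}"
      have "(\<Sum>i<a. \<Sum>j<a. (if p = 0 \<and> i = e then 1 else 0) * X i j * cnj (if q = 0 \<and> j = e then 1 else 0))
          = (\<Sum>i<a. if i = e then (\<Sum>j<a. if j = e then X e e else 0) else 0)"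
        using True e by (simp add: dsimps cong: if_cong)
      also have "\<dots> = X e e" using e by simp
      finally show "(\<Sum>i<a. \<Sum>j<a. (if p = 0 \<and> i = e then 1 else 0) * X i j * cnj (if q = 0 \<and> j = e then 1 else 0)) = X e e" .
    qed
    then show ?thesis using True by (simp add: trch_def app_kchan mtrace_def)
  next
    case False then show ?thesis by (auto simp: trch_def app_kchan)
  qed
qed

lemma trch_channel: "1 \<le> a \<Longrightarrow> is_channel (trch a)"
  unfolding trch_def
proof (rule kchan_channel)
  assume a: "1 \<le> a"
  show "finite {..<a}" "1 \<le> a" "1 \<le> (1::nat)" using a by auto
  fix i j assume i: "i < a" and j: "j < a"
  have "(\<Sum>e<a. \<Sum>p<(1::nat). (if p = 0 \<and> i = e then 1 else 0) * cnj (if p = 0 \<and> j = e then 1 else (0::complex)))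
      = (\<Sum>e<a. if e = i then (if i = j then 1 else 0) else 0)"
  proof (rule sum.cong[OF refl])
    fix e
    show "(\<Sum>p<(1::nat). (if p = 0 \<and> i = e then 1 else 0) * cnj (if p = 0 \<and> j = e then 1 else (0::complex)))
      = (if e = i then (if i = j then 1 else 0) else 0)" by (simp add: lt1)
  qed
  also have "\<dots> = (if i = j then 1 else 0)" using i by simp
  finally show "(\<Sum>e<a. \<Sum>p<(1::nat). (if p = 0 \<and> i = e then 1 else 0) * cnj (if p = 0 \<and> j = e then 1 else (0::complex))) = (if i = j then 1 else 0)" .
qed

definition depol :: "nat \<Rightarrow> nat \<Rightarrow> channel" where
  "depol n m = kchan n m ({..<m}\<times>{..<n}) (\<lambda>e p i. if p = fst e \<and> i = snd e then csq m else 0)"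

lemma depol_simps[simp]: "din (depol n m) = n" "dout (depol n m) = m"
  by (simp_all add: depol_def)

lemma app_depol: "0 < m \<Longrightarrow> app (depol n m) X = (\<lambda>p q. mtrace n X * unif m p q)"
proof (rule ext, rule ext)
  fix p q assume m: "0 < m"
  show "app (depol n m) X p q = mtrace n X * unif m p q"
  proof (cases "p < m \<and> q < m")
    case True
    have "(\<Sum>e\<in>{..<m}\<times>{..<n}. \<Sum>i<n. \<Sum>j<n. (if p = fst e \<and> i = snd e then csq m else 0) * X i j * cnj (if q = fst e \<and> j = snd e then csq m else 0))
        = (\<Sum>e\<in>{..<m}\<times>{..<n}. if p = q \<and> fst e = p then X (snd e) (snd e) * (csq m * cnj (csq m)) else 0)"
    proof (rule sum.cong[OF refl])
      fix e assume e: "e \<in> {..<m}\<times>{..<n}"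
      have "(\<Sum>i<n. \<Sum>j<n. (if p = fst e \<and> i = snd e then csq m else 0) * X i j * cnj (if q = fst e \<and> j = snd e then csq m else 0))
         = (\<Sum>i<n. if i = snd e then (\<Sum>j<n. if j = snd e then (if p = q \<and> fst e = p then X (snd e) (snd e) * (csq m * cnj (csq m)) else 0) else 0) else 0)"
        using e by (auto simp: dsimps mult_ac cong: if_cong)
      also have "\<dots> = (if p = q \<and> fst e = p then X (snd e) (snd e) * (csq m * cnj (csq m)) else 0)"
        using e by auto
      finally show "(\<Sum>i<n. \<Sum>j<n. (if p = fst e \<and> i = snd e then csq m else 0) * X i j * cnj (if q = fst e \<and> j = snd e then csq m else 0))
         = (if p = q \<and> fst e = p then X (snd e) (snd e) * (csq m * cnj (csq m)) else 0)" .
    qed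
    also have "\<dots> = (\<Sum>a<m. \<Sum>b<n. if p = q \<and> a = p then X b b * (csq m * cnj (csq m)) else 0)"
      by (simp only: sum.cartesian_product split_def)
    also have "\<dots> = (if p = q then (\<Sum>b<n. X b b) * (csq m * cnj (csq m)) else 0)"
      using True by (simp add: sum_distrib_right dsimps cong: if_cong)
    also have "\<dots> = mtrace n X * unif m p q"
      using True m by (simp add: csq_sq unif_eq mtrace_def)
    finally show ?thesis using True by (simp add: depol_def app_kchan)
  next
    case False then show ?thesis by (auto simp: depol_def app_kchan unif_eq)
  qed
qed

lemma depol_channel: "1 \<le> n \<Longrightarrow> 1 \<le> m \<Longrightarrow> is_channel (depol n m)"
  unfolding depol_def
proof (rule kchan_channel)
  assume n: "1 \<le> n" and m: "1 \<le> m"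
  show "finite ({..<m}\<times>{..<n})" "1 \<le> n" "1 \<le> m" using n m by auto
  fix i j assume i: "i < n" and j: "j < n"
  have "(\<Sum>e\<in>{..<m}\<times>{..<n}. \<Sum>p<m. (if p = fst e \<and> i = snd e then csq m else 0) * cnj (if p = fst e \<and> j = snd e then csq m else 0))
     = (\<Sum>e\<in>{..<m}\<times>{..<n}. if snd e = i \<and> i = j then csq m * cnj (csq m) else 0)"
  proof (rule sum.cong[OF refl])
    fix e assume e: "e \<in> {..<m}\<times>{..<n}"
    have "(\<Sum>p<m. (if p = fst e \<and> i = snd e then csq m else 0) * cnj (if p = fst e \<and> j = snd e then csq m else 0))
        = (\<Sum>p<m. if p = fst e then (if snd e = i \<and> i = j then csq m * cnj (csq m) else 0) else 0)"
      using e by (auto simp: dsimps cong: if_cong)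
    also have "\<dots> = (if snd e = i \<and> i = j then csq m * cnj (csq m) else 0)" using e by auto
    finally show "(\<Sum>p<m. (if p = fst e \<and> i = snd e then csq m else 0) * cnj (if p = fst e \<and> j = snd e then csq m else 0))
        = (if snd e = i \<and> i = j then csq m * cnj (csq m) else 0)" .
  qed
  also have "\<dots> = (\<Sum>a<m. \<Sum>b<n. if b = i \<and> i = j then csq m * cnj (csq m) else 0)"
    by (simp only: sum.cartesian_product split_def)
  also have "\<dots> = (if i = j then 1 else 0)"
    using i m by (simp add: csq_sq)
  finally show "(\<Sum>e\<in>{..<m}\<times>{..<n}. \<Sum>p<m. (if p = fst e \<and> i = snd e then csq m else 0) * cnj (if p = fst e \<and> j = snd e then csq m else 0)) = (if i = j then 1 else 0)" .
qed




lemma ch_tp: "is_channel N \<Longrightarrow> mtrace (dout N) (app N X) = mtrace (din N) X"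
  by (simp add: is_channel_def is_tp_def)

lemma ch_pos: "is_channel N \<Longrightarrow> 0 < din N \<and> 0 < dout N"
  by (simp add: is_channel_def)

lemma unif_restr: "restr n (unif n) = unif n"
  by (simp add: restr_def unif_eq fun_eq_iff)

lemma mtrace_kron_unif:
  assumes "0 < D"
  shows "mtrace D (kron D \<tau> (unif D)) = \<tau> 0 0"
proof -
  have "mtrace D (kron D \<tau> (unif D)) = (\<Sum>x<D. \<tau> 0 0 * (1 / of_nat D))"
    by (auto simp: mtrace_def kron_def unif_eq intro!: sum.cong)
  also have "\<dots> = \<tau> 0 0" using assms by simp
  finally show ?thesis .
qed

lemma density1: "density 1 \<tau> \<Longrightarrow> \<tau> 0 0 = 1"
  by (simp add: density_def mtrace_def)

lemma maj_depol:
  assumes cQ: "is_channel Q" and cS: "is_channel S"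
    and le1: "din S \<le> din Q" and le2: "dout Q \<le> dout S"
    and appS: "\<And>X. app S X = (\<lambda>p q. mtrace (din S) X * unif (dout S) p q)"
  shows "maj Q S"
proof -
  define src where "src = comp (iso_chan (dout Q) (dout S) (embm (dout Q))) Q"
  have pQ: "0 < din Q" "0 < dout Q" using ch_pos[OF cQ] by auto
  have pS: "0 < din S" "0 < dout S" using ch_pos[OF cS] by auto
  have isoW: "is_isometry (dout Q) (dout S) (embm (dout Q))"
    using pQ le2 by (intro embm_iso) auto
  have csrc: "is_channel src" unfolding src_def
    by (rule comp_channel[OF iso_channel[OF isoW] cQ]) simp
  have dsrc: "din src = din Q" "dout src = dout S" by (simp_all add: src_def)
  define V where "V = embm (din S)"
  define E where "E = depol (1 * dout S) (dout S)"
  have isoV: "is_isometry (din S) (1 * din Q) V"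
    unfolding V_def using pS le1 by (intro embm_iso) auto
  have cE: "is_channel E" unfolding E_def using pS by (intro depol_channel) auto
  have real: "is_realization (din Q) (dout S) (din S) 1 V E"
    using isoV cE by (simp add: is_realization_def E_def)
  have mix: "mixing_realization (din Q) (dout S) (din S) 1 V E"
    unfolding mixing_realization_def
  proof (intro conjI allI impI)
    show "is_realization (din Q) (dout S) (din S) 1 V E" by (rule real)
  next
    fix r' V' E' assume "is_realization (din Q) (dout S) (din S) r' V' E'"
    then show "1 \<le> r'" by (simp add: is_realization_def)
  next
    fix \<tau> :: cmat assume "density 1 \<tau>"
    then have t: "\<tau> 0 0 = 1" by (rule density1)
    show "app E (kron (dout S) \<tau> (unif (dout S))) = restr (dout S) (unif (dout S))"
      using pS t by (simp add: E_def app_depol mtrace_kron_unif unif_restr)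
  qed
  have ceq: "chan_eq S (super (din S) 1 V E src)"
    unfolding chan_eq_def
  proof (intro conjI allI)
    show "din S = din (super (din S) 1 V E src)" by simp
    show "dout S = dout (super (din S) 1 V E src)" by (simp add: dsrc)
    fix X
    have "app (super (din S) 1 V E src) X = app E (idtensor 1 src (app (iso_chan (din S) (1 * din src) V) X))"
      by (rule app_super) (simp add: E_def dsrc)
    also have "\<dots> = app E (app src (app (iso_chan (din S) (1 * din src) V) X))"
      using idtensor_1[of src] ch_pos[OF csrc] by simp
    also have "\<dots> = (\<lambda>p q. mtrace (din S) X * unif (dout S) p q)"
    proof -
      have "mtrace (1 * dout S) (app src (app (iso_chan (din S) (1 * din src) V) X))
          = mtrace (din src) (app (iso_chan (din S) (1 * din src) V) X)"
        using ch_tp[OF csrc] by (simp add: dsrc)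
      also have "\<dots> = mtrace (din S) X"
        using ch_tp[OF iso_channel[OF isoV]] by (simp add: dsrc)
          finally show ?thesis using pS by (simp add: E_def app_depol)
    qed
    finally show "app S X = app (super (din S) 1 V E src) X" by (simp add: appS)
  qed
  have ms: "maj_same src S"
    unfolding maj_same_def using dsrc mix ceq by auto
  show ?thesis
    unfolding maj_def using le2 isoW ms by (auto simp: src_def)
qed




lemma iso_dim:
  assumes iso: "is_isometry a b V"
  shows "a \<le> b"
proof -
  have orth: "\<And>i j. i < a \<Longrightarrow> j < a \<Longrightarrow> (\<Sum>k<b. cnj (V k i) * V k j) = (if i = j then 1 else 0)"
    using iso by (simp add: is_isometry_def)
  define P where "P k l = (\<Sum>i<a. V k i * cnj (V l i))" for k l
  define dr where "dr k = (\<Sum>i<a. (cmod (V k i))^2)" for k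
  have Pkk: "P k k = complex_of_real (dr k)" for k
    by (simp only: P_def dr_def of_real_sum complex_norm_square)
  have sq: "(\<Sum>l<b. P k l * cnj (P k l)) = P k k" for k
  proof -
    have "(\<Sum>l<b. P k l * cnj (P k l)) = (\<Sum>l<b. \<Sum>i<a. \<Sum>j<a. V k i * cnj (V k j) * (cnj (V l i) * V l j))"
      by (simp add: P_def sum_distrib_left sum_distrib_right mult_ac)
    also have "\<dots> = (\<Sum>i<a. \<Sum>l<b. \<Sum>j<a. V k i * cnj (V k j) * (cnj (V l i) * V l j))"
      by (rule sum.swap)
    also have "\<dots> = (\<Sum>i<a. \<Sum>j<a. \<Sum>l<b. V k i * cnj (V k j) * (cnj (V l i) * V l j))"
      by (rule sum.cong[OF refl], rule sum.swap)
    also have "\<dots> = (\<Sum>i<a. \<Sum>j<a. V k i * cnj (V k j) * (\<Sum>l<b. cnj (V l i) * V l j))"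
      by (simp add: sum_distrib_left)
    also have "\<dots> = (\<Sum>i<a. \<Sum>j<a. if j = i then V k i * cnj (V k i) else 0)"
      by (rule sum.cong[OF refl], rule sum.cong[OF refl]) (auto simp: orth)
    also have "\<dots> = P k k" by (simp add: P_def)
    finally show ?thesis .
  qed
  have drnn: "0 \<le> dr k" for k by (simp add: dr_def sum_nonneg)
  have le1: "dr k \<le> 1" if k: "k < b" for k
  proof -
    have "complex_of_real (\<Sum>l<b. (cmod (P k l))^2) = (\<Sum>l<b. P k l * cnj (P k l))"
      by (simp only: of_real_sum complex_norm_square)
    also have "\<dots> = complex_of_real (dr k)" by (simp add: sq Pkk)
    finally have s: "(\<Sum>l<b. (cmod (P k l))^2) = dr k" by (simp only: of_real_eq_iff)
    have "(cmod (P k k))^2 \<le> (\<Sum>l<b. (cmod (P k l))^2)"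
      using k by (intro member_le_sum) auto
    moreover have "cmod (P k k) = dr k" using drnn[of k] by (simp add: Pkk)
    ultimately have "dr k * dr k \<le> dr k" using s by (simp add: power2_eq_square)
    then show ?thesis using drnn[of k]
      by (cases "dr k = 0") (auto simp: mult_le_cancel_right1)
  qed
  have tot: "(\<Sum>k<b. dr k) = real a"
  proof -
    have "complex_of_real (\<Sum>k<b. dr k) = (\<Sum>k<b. P k k)" by (simp add: Pkk)
    also have "\<dots> = (\<Sum>i<a. \<Sum>k<b. V k i * cnj (V k i))"
      unfolding P_def by (rule sum.swap)
    also have "\<dots> = (\<Sum>i<a. cnj (\<Sum>k<b. cnj (V k i) * V k i))"
      by (simp add: mult.commute)
    also have "\<dots> = (\<Sum>i<a. 1)" by (simp add: orth)
    finally show ?thesis by (metis of_real_eq_iff of_real_of_nat_eq card_lessThan sum_constant mult.right_neutral)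
  qed
  have "(\<Sum>k<b. dr k) \<le> (\<Sum>k<b. 1)" by (rule sum_mono) (simp add: le1)
  then show ?thesis using tot by simp
qed




definition wz :: "nat \<Rightarrow> nat \<Rightarrow> nat \<Rightarrow> complex" where
  "wz b t q = cis (2 * pi * (real t * real q) / real b)"

lemma wz_cnj: "wz b t q * cnj (wz b t q') = cis (2 * pi * (real q - real q') / real b) ^ t"
proof -
  have "wz b t q * cnj (wz b t q') = cis (2 * pi * (real t * real q) / real b - 2 * pi * (real t * real q') / real b)"
    by (simp add: wz_def cis_cnj cis_mult)
  also have "2 * pi * (real t * real q) / real b - 2 * pi * (real t * real q') / real b
      = real t * (2 * pi * (real q - real q') / real b)"
    by (cases "b = 0") (simp_all add: field_simps)
  finally show ?thesis by (simp add: DeMoivre)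
qed

lemma cis_ne_1:
  assumes q: "q < b" and q': "q' < b" and ne: "q \<noteq> q'"
  shows "cis (2 * pi * (real q - real q') / real b) \<noteq> 1"
proof
  assume "cis (2 * pi * (real q - real q') / real b) = 1"
  then have "cos (2 * pi * (real q - real q') / real b) = 1"
    by (metis cis.sel(1) one_complex.sel(1))
  then obtain n :: int where n: "2 * pi * (real q - real q') / real b = real_of_int n * 2 * pi"
    by (auto simp: cos_one_2pi_int)
  have b: "0 < real b" using q by simp
  define X where "X = (real q - real q') / real b"
  have "(2 * pi) * X = (2 * pi) * real_of_int n"
    using n unfolding X_def by (simp add: algebra_simps)
  then have "2 * pi = 0 \<or> X = real_of_int n" by (simp only: mult_cancel_left)
  then have "(real q - real q') / real b = real_of_int n" using pi_gt_zero unfolding X_def by auto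
  then have e: "real q - real q' = real_of_int n * real b"
    using b by (simp add: field_simps)
  have "\<bar>real q - real q'\<bar> < real b" using q q' by auto
  then have "\<bar>real_of_int n\<bar> * real b < 1 * real b" using e by (simp add: abs_mult)
  then have "\<bar>real_of_int n\<bar> < 1" using b by (simp only: mult_less_cancel_right)
  then have "n = 0" by linarith
  then show False using e ne by simp
qed

lemma root_sum:
  assumes q: "q < b" and q': "q' < b"
  shows "(\<Sum>t<b. wz b t q * cnj (wz b t q')) = (if q = q' then of_nat b else 0)"
proof (cases "q = q'")
  case True
  then show ?thesis by (simp add: wz_cnj)
next
  case False
  define z where "z = cis (2 * pi * (real q - real q') / real b)"
  have z1: "z \<noteq> 1" unfolding z_def by (rule cis_ne_1[OF q q' False])
  have b: "0 < real b" using q by simp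
  have "z ^ b = cis (real b * (2 * pi * (real q - real q') / real b))"
    by (simp add: z_def DeMoivre)
  also have "real b * (2 * pi * (real q - real q') / real b) = 2 * pi * (real_of_int (int q - int q'))"
    using b by (simp add: field_simps)
  also have "cis \<dots> = 1" by (rule cis_multiple_2pi) simp
  finally have zb: "z ^ b = 1" .
  have "(\<Sum>t<b. wz b t q * cnj (wz b t q')) = (\<Sum>t<b. z ^ t)"
    by (simp add: wz_cnj z_def)
  also have "\<dots> = 0" using z1 zb by (simp add: sum_gp_strict)
  finally show ?thesis using False by simp
qed

lemma wz_norm: "wz b t q * cnj (wz b t q) = 1"
  by (simp add: wz_cnj)

lemma wz_0: "wz b 0 q = 1"
  by (simp add: wz_def)

lemma shift_inj_aux: "s \<le> s' \<Longrightarrow> s' < b \<Longrightarrow> (q + s) mod b = (q + s') mod (b::nat) \<Longrightarrow> s = s'"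
proof -
  assume a: "s \<le> s'" "s' < b" and e: "(q + s) mod b = (q + s') mod b"
  have le: "q + s \<le> q + s'" using a by simp
  have "b dvd (q + s') - (q + s)" using mod_eq_dvd_iff_nat[OF le, of b] e by (simp add: eq_commute)
  then have "b dvd s' - s" by simp
  moreover have "s' - s < b" using a by simp
  ultimately have "s' - s = 0" using dvd_imp_le by (metis gr0I not_less)
  then show "s = s'" using a by simp
qed

lemma shift_inj: "s < b \<Longrightarrow> s' < b \<Longrightarrow> (q + s) mod b = (q + s') mod (b::nat) \<Longrightarrow> s = s'"
  by (metis shift_inj_aux nat_le_linear)

lemma shift_inj2: "i < b \<Longrightarrow> j < b \<Longrightarrow> (i + s) mod b = (j + s) mod (b::nat) \<Longrightarrow> i = j"
  using shift_inj[of i b j s] by (simp add: add.commute)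

lemma shift_count:
  assumes p: "p < b" and q: "q < (b::nat)"
  shows "(\<Sum>s<b. if p = (q + s) mod b then (1::complex) else 0) = 1"
proof -
  have inj: "inj_on (\<lambda>s. (q + s) mod b) {..<b}"
    by (auto intro!: inj_onI dest: shift_inj)
  have img: "(\<lambda>s. (q + s) mod b) ` {..<b} = {..<b}"
    by (rule endo_inj_surj) (use inj q in auto)
  have "(\<Sum>s<b. if p = (q + s) mod b then (1::complex) else 0) = (\<Sum>x\<in>(\<lambda>s. (q + s) mod b) ` {..<b}. if p = x then 1 else 0)"
    by (simp add: sum.reindex[OF inj])
  also have "\<dots> = 1" using img p by simp
  finally show ?thesis .
qed




definition weyl :: "nat \<Rightarrow> nat \<Rightarrow> cmat" where
  "weyl b y p q = (if p = (q + y div b) mod b then wz b (y mod b) q else 0)"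

lemma weyl0: "q < b \<Longrightarrow> weyl b 0 p q = (if p = q then 1 else 0)"
  by (simp add: weyl_def wz_0)

lemma weyl_unitary:
  assumes i: "i < b" and j: "j < b"
  shows "(\<Sum>p<b. weyl b y p i * cnj (weyl b y p j)) = (if i = j then 1 else 0)"
proof -
  have b: "0 < b" using i by simp
  have "(\<Sum>p<b. weyl b y p i * cnj (weyl b y p j))
      = (\<Sum>p<b. if p = (i + y div b) mod b then (if (i + y div b) mod b = (j + y div b) mod b then wz b (y mod b) i * cnj (wz b (y mod b) j) else 0) else 0)"
    by (rule sum.cong) (auto simp: weyl_def)
  also have "\<dots> = (if (i + y div b) mod b = (j + y div b) mod b then wz b (y mod b) i * cnj (wz b (y mod b) j) else 0)"
    using b by simp
  also have "\<dots> = (if i = j then 1 else 0)"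
    using shift_inj2[OF i j, of "y div b"] by (auto simp: wz_norm)
  finally show ?thesis .
qed

lemma twirl:
  assumes p: "p < b" and p': "p' < b"
  shows "(\<Sum>y<b*b. \<Sum>q<b. \<Sum>q'<b. weyl b y p q * W q q' * cnj (weyl b y p' q'))
       = (if p = p' then of_nat b * (\<Sum>q<b. W q q) else 0)"
proof -
  have b: "0 < b" using p by simp
  define C where "C s q q' = (p = (q + s) mod b \<and> p' = (q' + s) mod b)" for s q q'
  have "(\<Sum>y<b*b. \<Sum>q<b. \<Sum>q'<b. weyl b y p q * W q q' * cnj (weyl b y p' q'))
      = (\<Sum>s<b. \<Sum>t<b. \<Sum>q<b. \<Sum>q'<b. weyl b (s*b+t) p q * W q q' * cnj (weyl b (s*b+t) p' q'))"
    by (rule sum_split_mult)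
  also have "\<dots> = (\<Sum>s<b. \<Sum>t<b. \<Sum>q<b. \<Sum>q'<b. if C s q q' then W q q' * (wz b t q * cnj (wz b t q')) else 0)"
    by (intro sum.cong refl) (auto simp: weyl_def C_def)
  also have "\<dots> = (\<Sum>s<b. \<Sum>q<b. \<Sum>t<b. \<Sum>q'<b. if C s q q' then W q q' * (wz b t q * cnj (wz b t q')) else 0)"
    by (rule sum.cong[OF refl], rule sum.swap)
  also have "\<dots> = (\<Sum>s<b. \<Sum>q<b. \<Sum>q'<b. \<Sum>t<b. if C s q q' then W q q' * (wz b t q * cnj (wz b t q')) else 0)"
    by (rule sum.cong[OF refl], rule sum.cong[OF refl], rule sum.swap)
  also have "\<dots> = (\<Sum>s<b. \<Sum>q<b. \<Sum>q'<b. if C s q q' then W q q' * (\<Sum>t<b. wz b t q * cnj (wz b t q')) else 0)"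
    by (simp add: sum_distrib_left sum_ifz_out cong: if_cong)
  also have "\<dots> = (\<Sum>s<b. \<Sum>q<b. \<Sum>q'<b. if q' = q then (if C s q q then W q q * of_nat b else 0) else 0)"
    by (intro sum.cong refl) (auto simp: root_sum)
  also have "\<dots> = (\<Sum>s<b. \<Sum>q<b. if C s q q then W q q * of_nat b else 0)"
    by simp
  also have "\<dots> = (\<Sum>q<b. \<Sum>s<b. if C s q q then W q q * of_nat b else 0)"
    by (rule sum.swap)
  also have "\<dots> = (\<Sum>q<b. if p = p' then W q q * of_nat b * (\<Sum>s<b. if p = (q + s) mod b then 1 else 0) else 0)"
    by (intro sum.cong refl) (auto simp: C_def sum_distrib_left intro!: sum.cong sum.neutral)
  also have "\<dots> = (\<Sum>q<b. if p = p' then W q q * of_nat b else 0)"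
    by (intro sum.cong refl) (auto simp: shift_count[OF p'])
  also have "\<dots> = (if p = p' then of_nat b * (\<Sum>q<b. W q q) else 0)"
    by (simp add: sum_distrib_left mult.commute)
  finally show ?thesis .
qed




definition sig :: "nat \<Rightarrow> nat \<Rightarrow> nat \<Rightarrow> nat" where "sig a D i = (i mod D) * a + i div D"
definition tau :: "nat \<Rightarrow> nat \<Rightarrow> nat \<Rightarrow> nat" where "tau a D p = (p mod a) * D + p div a"

lemma sig_lt: "i < a * D \<Longrightarrow> sig a D i < D * a"
  unfolding sig_def
proof -
  assume i: "i < a * D"
  then have D: "0 < D" by (cases D) auto
  have "i div D < a" using i by (simp add: div_lt_aux mult.commute less_mult_imp_div_less)
  then show "i mod D * a + i div D < D * a" using D by (intro blk_lt) auto
qed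

lemma tau_lt: "p < D * a \<Longrightarrow> tau a D p < a * D"
  unfolding tau_def
proof -
  assume p: "p < D * a"
  then have a: "0 < a" by (cases a) auto
  have "p div a < D" using p by (simp add: less_mult_imp_div_less)
  then show "p mod a * D + p div a < a * D" using a by (intro blk_lt) auto
qed

lemma tau_sig: "i < a * D \<Longrightarrow> tau a D (sig a D i) = i"
proof -
  assume i: "i < a * D"
  then have D: "0 < D" by (cases D) auto
  have l: "i div D < a" using i by (simp add: mult.commute less_mult_imp_div_less)
  have "sig a D i mod a = i div D" using l by (simp add: sig_def)
  moreover have "sig a D i div a = i mod D" using l by (simp add: sig_def)
  ultimately show ?thesis by (simp add: tau_def)
qed

lemma sig_tau: "p < D * a \<Longrightarrow> sig a D (tau a D p) = p"
proof -
  assume p: "p < D * a"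
  then have a: "0 < a" by (cases a) auto
  have l: "p div a < D" using p by (simp add: less_mult_imp_div_less)
  have "tau a D p mod D = p div a" using l by (simp add: tau_def)
  moreover have "tau a D p div D = p mod a" using l by (simp add: tau_def)
  ultimately show ?thesis by (simp add: sig_def)
qed

lemma sig_iff: "i < a * D \<Longrightarrow> p < D * a \<Longrightarrow> (p = sig a D i) = (i = tau a D p)"
  using sig_tau tau_sig by metis

definition Sw :: "nat \<Rightarrow> nat \<Rightarrow> channel" where
  "Sw a D = kchan (a*D) (D*a) {0::nat} (\<lambda>_ p q. if p = sig a D q then 1 else 0)"

lemma Sw_simps[simp]: "din (Sw a D) = a * D" "dout (Sw a D) = D * a"
  by (simp_all add: Sw_def)

lemma sum_sig_delta:
  fixes f :: "nat \<Rightarrow> complex"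
  assumes p: "p < D * a"
  shows "(\<Sum>i<a*D. (if p = sig a D i then 1 else 0) * f i) = f (tau a D p)"
proof -
  have "(\<Sum>i<a*D. (if p = sig a D i then 1 else 0) * f i) = (\<Sum>i<a*D. if i = tau a D p then f i else 0)"
    by (rule sum.cong) (auto simp: sig_iff[OF _ p])
  also have "\<dots> = f (tau a D p)" using tau_lt[OF p] by simp
  finally show ?thesis .
qed

lemma app_Sw: "app (Sw a D) Z = (\<lambda>p q. if p < D*a \<and> q < D*a then Z (tau a D p) (tau a D q) else 0)"
proof (rule ext, rule ext)
  fix p q
  show "app (Sw a D) Z p q = (if p < D*a \<and> q < D*a then Z (tau a D p) (tau a D q) else 0)"
  proof (cases "p < D*a \<and> q < D*a")
    case True
    then have p: "p < D*a" and q: "q < D*a" by auto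
    have "(\<Sum>i<a*D. \<Sum>j<a*D. (if p = sig a D i then 1 else 0) * Z i j * cnj (if q = sig a D j then 1 else (0::complex)))
        = (\<Sum>i<a*D. (if p = sig a D i then 1 else 0) * (\<Sum>j<a*D. (if q = sig a D j then 1 else 0) * Z i j))"
      by (simp add: sum_distrib_left mult_ac cnj_ifz cong: if_cong)
    also have "\<dots> = (\<Sum>i<a*D. (if p = sig a D i then 1 else 0) * Z i (tau a D q))"
      by (simp add: sum_sig_delta[OF q])
    also have "\<dots> = Z (tau a D p) (tau a D q)"
      by (rule sum_sig_delta[OF p])
    finally show ?thesis using True by (simp add: Sw_def app_kchan)
  next
    case False then show ?thesis by (auto simp: Sw_def app_kchan)
  qed
qed

lemma Sw_channel: "1 \<le> a \<Longrightarrow> 1 \<le> D \<Longrightarrow> is_channel (Sw a D)"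
  unfolding Sw_def
proof (rule kchan_channel)
  assume a: "1 \<le> a" and D: "1 \<le> D"
  show "finite {0::nat}" "1 \<le> a * D" "1 \<le> D * a" using a D by auto
  fix i j assume i: "i < a * D" and j: "j < a * D"
  have "(\<Sum>p<D*a. (if p = sig a D i then 1 else 0) * cnj (if p = sig a D j then 1 else (0::complex)))
      = (\<Sum>p<D*a. if p = sig a D i then (if i = j then 1 else 0) else 0)"
  proof (rule sum.cong[OF refl])
    fix p
    have inj: "sig a D i = sig a D j \<Longrightarrow> i = j" using tau_sig[OF i] tau_sig[OF j] by metis
    show "(if p = sig a D i then 1 else 0) * cnj (if p = sig a D j then 1 else (0::complex))
      = (if p = sig a D i then (if i = j then 1 else 0) else 0)"
      using inj by auto
  qed
  also have "\<dots> = (if i = j then 1 else 0)" using sig_lt[OF i] by simp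
  finally show "(\<Sum>e\<in>{0::nat}. \<Sum>p<D*a. (if p = sig a D i then 1 else 0) * cnj (if p = sig a D j then 1 else (0::complex))) = (if i = j then 1 else 0)"
    by simp
qed




lemma block_quad:
  fixes h h' :: "nat \<Rightarrow> complex"
  assumes d: "d < k" and n: "0 < n"
  shows "(\<Sum>i<k*n. \<Sum>j<k*n. (if i div n = d then h (i mod n) else 0) * W i j * cnj (if j div n = d then h' (j mod n) else 0))
       = (\<Sum>i<n. \<Sum>j<n. h i * W (d*n+i) (d*n+j) * cnj (h' j))"
proof -
  have "(\<Sum>i<k*n. \<Sum>j<k*n. (if i div n = d then h (i mod n) else 0) * W i j * cnj (if j div n = d then h' (j mod n) else 0))
      = (\<Sum>i<k*n. (if i div n = d then h (i mod n) else 0) * (\<Sum>j<k*n. (if j div n = d then cnj (h' (j mod n)) else 0) * W i j))"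
    by (simp add: sum_distrib_left mult_ac cnj_ifz cong: if_cong)
  also have "\<dots> = (\<Sum>i<k*n. (if i div n = d then h (i mod n) else 0) * (\<Sum>j<n. cnj (h' j) * W i (d*n+j)))"
  proof (rule sum.cong[OF refl])
    fix i
    have "(\<Sum>j<k*n. (if j div n = d then cnj (h' (j mod n)) else 0) * W i j) = (\<Sum>j<n. cnj (h' j) * W i (d*n+j))"
      using sum_block_delta[OF d n, where h="\<lambda>j. cnj (h' j)" and g="W i"] by simp
    then show "(if i div n = d then h (i mod n) else 0) * (\<Sum>j<k*n. (if j div n = d then cnj (h' (j mod n)) else 0) * W i j)
      = (if i div n = d then h (i mod n) else 0) * (\<Sum>j<n. cnj (h' j) * W i (d*n+j))" by simp
  qed
  also have "\<dots> = (\<Sum>i<n. h i * (\<Sum>j<n. cnj (h' j) * W (d*n+i) (d*n+j)))"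
    by (rule sum_block_delta[OF d n])
  also have "\<dots> = (\<Sum>i<n. \<Sum>j<n. h i * W (d*n+i) (d*n+j) * cnj (h' j))"
    by (simp add: sum_distrib_left mult_ac)
  finally show ?thesis .
qed

definition G0 :: "nat \<Rightarrow> channel" where
  "G0 b = kchan (b*b*b) b {..<b*b} (\<lambda>y p i. if i div b = y then weyl b y p (i mod b) else 0)"

lemma G0_simps[simp]: "din (G0 b) = b*b*b" "dout (G0 b) = b"
  by (simp_all add: G0_def)

lemma app_G0: "app (G0 b) W = (\<lambda>p q. if p < b \<and> q < b then
   \<Sum>y<b*b. \<Sum>i<b. \<Sum>j<b. weyl b y p i * W (y*b+i) (y*b+j) * cnj (weyl b y q j) else 0)"
proof (rule ext, rule ext)
  fix p q
  show "app (G0 b) W p q = (if p < b \<and> q < b then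
   \<Sum>y<b*b. \<Sum>i<b. \<Sum>j<b. weyl b y p i * W (y*b+i) (y*b+j) * cnj (weyl b y q j) else 0)"
  proof (cases "p < b \<and> q < b")
    case True
    then have b: "0 < b" by auto
    have "(\<Sum>y<b*b. \<Sum>i<b*b*b. \<Sum>j<b*b*b. (if i div b = y then weyl b y p (i mod b) else 0) * W i j * cnj (if j div b = y then weyl b y q (j mod b) else 0))
      = (\<Sum>y<b*b. \<Sum>i<b. \<Sum>j<b. weyl b y p i * W (y*b+i) (y*b+j) * cnj (weyl b y q j))"
      by (rule sum.cong[OF refl], rule block_quad) (use b in auto)
    then show ?thesis using True by (simp add: G0_def app_kchan)
  next
    case False then show ?thesis by (auto simp: G0_def app_kchan)
  qed
qed

lemma G0_channel: "1 \<le> b \<Longrightarrow> is_channel (G0 b)"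
  unfolding G0_def
proof (rule kchan_channel)
  assume b: "1 \<le> b"
  show "finite {..<b*b}" "1 \<le> b*b*b" "1 \<le> b" using b by auto
  fix i j assume i: "i < b*b*b" and j: "j < b*b*b"
  have idb: "i div b < b*b" "j div b < b*b" using i j by (auto simp: less_mult_imp_div_less)
  have mb: "i mod b < b" "j mod b < b" using b by auto
  have "(\<Sum>y<b*b. \<Sum>p<b. (if i div b = y then weyl b y p (i mod b) else 0) * cnj (if j div b = y then weyl b y p (j mod b) else 0))
      = (\<Sum>y<b*b. if y = i div b then (if i div b = j div b then (\<Sum>p<b. weyl b y p (i mod b) * cnj (weyl b y p (j mod b))) else 0) else 0)"
    by (rule sum.cong) (auto simp: dsimps cong: if_cong)
  also have "\<dots> = (if i div b = j div b then (\<Sum>p<b. weyl b (i div b) p (i mod b) * cnj (weyl b (i div b) p (j mod b))) else 0)"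
    using idb by simp
  also have "\<dots> = (if i div b = j div b then (if i mod b = j mod b then 1 else 0) else 0)"
    by (simp add: weyl_unitary[OF mb])
  also have "\<dots> = (if i = j then 1 else 0)"
    by (metis div_mult_mod_eq)
  finally show "(\<Sum>y<b*b. \<Sum>p<b. (if i div b = y then weyl b y p (i mod b) else 0) * cnj (if j div b = y then weyl b y p (j mod b) else 0)) = (if i = j then 1 else 0)" .
qed

definition Apd :: "nat \<Rightarrow> channel" where
  "Apd b = kchan b (b*b) {..<b} (\<lambda>m p i. if p = i*b+m then csq b else 0)"

lemma Apd_simps[simp]: "din (Apd b) = b" "dout (Apd b) = b*b"
  by (simp_all add: Apd_def)

lemma idx_iff: "m < b \<Longrightarrow> (x = i*b + m) = (i = x div b \<and> m = x mod (b::nat))"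
  by auto

lemma app_Apd: "app (Apd b) W = (\<lambda>x y. if x < b*b \<and> y < b*b then W (x div b) (y div b) * unif b (x mod b) (y mod b) else 0)"
proof (rule ext, rule ext)
  fix x y
  show "app (Apd b) W x y = (if x < b*b \<and> y < b*b then W (x div b) (y div b) * unif b (x mod b) (y mod b) else 0)"
  proof (cases "x < b*b \<and> y < b*b")
    case True
    then have b: "0 < b" by (cases b) auto
    have xb: "x div b < b" "y div b < b" using True by (auto simp: less_mult_imp_div_less)
    have "(\<Sum>m<b. \<Sum>i<b. \<Sum>j<b. (if x = i*b+m then csq b else 0) * W i j * cnj (if y = j*b+m then csq b else 0))
        = (\<Sum>m<b. \<Sum>i<b. \<Sum>j<b. if m = x mod b then (if i = x div b then (if j = y div b then
              (if m = y mod b then W i j * (csq b * cnj (csq b)) else 0) else 0) else 0) else 0)"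
      by (intro sum.cong refl) (auto simp: idx_iff)
    also have "\<dots> = (if x mod b = y mod b then W (x div b) (y div b) * (csq b * cnj (csq b)) else 0)"
      using b xb by (simp add: dsimps cong: if_cong)
    also have "\<dots> = W (x div b) (y div b) * unif b (x mod b) (y mod b)"
      using b by (simp add: csq_sq unif_eq)
    finally show ?thesis using True by (simp add: Apd_def app_kchan)
  next
    case False then show ?thesis by (auto simp: Apd_def app_kchan)
  qed
qed

lemma Apd_channel: "1 \<le> b \<Longrightarrow> is_channel (Apd b)"
  unfolding Apd_def
proof (rule kchan_channel)
  assume b: "1 \<le> b"
  show "finite {..<b}" "1 \<le> b" "1 \<le> b*b" using b by auto
  fix i j assume i: "i < b" and j: "j < b"
  have "(\<Sum>m<b. \<Sum>p<b*b. (if p = i*b+m then csq b else 0) * cnj (if p = j*b+m then csq b else 0))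
      = (\<Sum>m<b. if i = j then csq b * cnj (csq b) else 0)"
  proof (rule sum.cong[OF refl])
    fix m assume m: "m \<in> {..<b}"
    have lt: "i*b+m < b*b" using i m by (intro blk_lt) auto
    have "(\<Sum>p<b*b. (if p = i*b+m then csq b else 0) * cnj (if p = j*b+m then csq b else 0))
        = (\<Sum>p<b*b. if p = i*b+m then (if i = j then csq b * cnj (csq b) else 0) else 0)"
      by (rule sum.cong) auto
    also have "\<dots> = (if i = j then csq b * cnj (csq b) else 0)" using lt by simp
    finally show "(\<Sum>p<b*b. (if p = i*b+m then csq b else 0) * cnj (if p = j*b+m then csq b else 0))
        = (if i = j then csq b * cnj (csq b) else 0)" .
  qed
  also have "\<dots> = (if i = j then 1 else 0)" using b by (simp add: csq_sq)
  finally show "(\<Sum>m<b. \<Sum>p<b*b. (if p = i*b+m then csq b else 0) * cnj (if p = j*b+m then csq b else 0)) = (if i = j then 1 else 0)" .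
qed

lemma ctensor_simps[simp]: "din (ctensor N M) = din N * din M" "dout (ctensor N M) = dout N * dout M"
  by (simp_all add: ctensor_def)

lemma app_ctensor1:
  assumes lin: "is_linear_map N" and dM: "din M = 1"
  shows "app (ctensor N M) X = (\<lambda>x y. if x < dout N * dout M \<and> y < dout N * dout M then
     app N X (x div dout M) (y div dout M) * app M (unitmat 0 0) (x mod dout M) (y mod dout M) else 0)"
proof (rule ext, rule ext)
  fix x y
  show "app (ctensor N M) X x y = (if x < dout N * dout M \<and> y < dout N * dout M then
     app N X (x div dout M) (y div dout M) * app M (unitmat 0 0) (x mod dout M) (y mod dout M) else 0)"
  proof (cases "x < dout N * dout M \<and> y < dout N * dout M")
    case True
    have "app (ctensor N M) X x y = (\<Sum>i<din N. \<Sum>j<din N. restr (din N * 1) X i j *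
        (app N (unitmat i j) (x div dout M) (y div dout M) * app M (unitmat 0 0) (x mod dout M) (y mod dout M)))"
      using True dM unfolding app_def[of "ctensor N M"] by (auto simp: ctensor_def restr_def kron_def lt1 intro!: sum.cong)
    also have "\<dots> = (\<Sum>i<din N. \<Sum>j<din N. X i j * app N (unitmat i j) (x div dout M) (y div dout M)) *
        app M (unitmat 0 0) (x mod dout M) (y mod dout M)"
      by (auto simp: sum_distrib_left sum_distrib_right mult_ac restr_def intro!: sum.cong)
    also have "\<dots> = app N X (x div dout M) (y div dout M) * app M (unitmat 0 0) (x mod dout M) (y mod dout M)"
      by (simp add: app_expand[OF lin, of X])
    finally show ?thesis using True by simp
  next
    case False then show ?thesis by (auto simp: app_def restr_def)
  qed
qed




lemma lin_scale:
  assumes lin: "is_linear_map N"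
  shows "app N (\<lambda>i j. c * X i j) = (\<lambda>p q. c * app N X p q)"
proof -
  have l: "\<forall>c X Y. app N (\<lambda>i j. c * X i j + Y i j) = (\<lambda>i j. c * app N X i j + app N Y i j)"
    using lin unfolding is_linear_map_def .
  have "app N (\<lambda>i j. c * X i j + 0) = (\<lambda>i j. c * app N X i j + app N (\<lambda>i j. 0) i j)"
    using l[rule_format, of c X "\<lambda>i j. 0"] by simp
  then show ?thesis using lin_zero[OF lin] by simp
qed

lemma app_Sw_kron:
  assumes a: "0 < a" and D: "0 < D"
  shows "app (Sw a D) (kron D F R) = (\<lambda>p q. if p < D*a \<and> q < D*a then F (p mod a) (q mod a) * R (p div a) (q div a) else 0)"
proof -
  have t1: "tau a D p div D = p mod a" "tau a D p mod D = p div a" if "p < D*a" for p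
  proof -
    have "p div a < D" using that by (simp add: less_mult_imp_div_less)
    then show "tau a D p div D = p mod a" "tau a D p mod D = p div a" by (simp_all add: tau_def)
  qed
  show ?thesis by (auto simp: app_Sw kron_def t1 fun_eq_iff)
qed

definition Ecomp :: "channel \<Rightarrow> channel" where
  "Ecomp N = comp (Apd (dout N)) (comp (G0 (dout N)) (comp (amp (dout N * dout N) N) (Sw (din N) (dout N * dout N))))"

lemma Ecomp_simps[simp]: "din (Ecomp N) = din N * (dout N * dout N)" "dout (Ecomp N) = dout N * dout N"
  by (simp_all add: Ecomp_def)

lemma Ecomp_channel:
  assumes cN: "is_channel N"
  shows "is_channel (Ecomp N)"
proof -
  have p: "1 \<le> din N" "1 \<le> dout N" using cN by (auto simp: is_channel_def)
  have c1: "is_channel (comp (amp (dout N * dout N) N) (Sw (din N) (dout N * dout N)))"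
    by (rule comp_channel[OF amp_channel[OF cN] Sw_channel]) (use p in auto)
  have c2: "is_channel (comp (G0 (dout N)) (comp (amp (dout N * dout N) N) (Sw (din N) (dout N * dout N))))"
    by (rule comp_channel[OF G0_channel c1]) (use p in \<open>auto simp: mult.commute\<close>)
  show ?thesis unfolding Ecomp_def
    by (rule comp_channel[OF Apd_channel c2]) (use p in auto)
qed

lemma app_Ecomp_kron:
  assumes cN: "is_channel N"
  defines "a \<equiv> din N" and "b \<equiv> dout N"
  shows "app (Ecomp N) (kron (b*b) F R) = (\<lambda>x y. if x < b*b \<and> y < b*b then
     (\<Sum>y0<b*b. R y0 y0 * (\<Sum>i<b. \<Sum>j<b. weyl b y0 (x div b) i * app N F i j * cnj (weyl b y0 (y div b) j)))
     * unif b (x mod b) (y mod b) else 0)"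
proof -
  have a: "0 < a" and b: "0 < b" using cN by (auto simp: is_channel_def a_def b_def)
  have lin: "is_linear_map N" using cN by (simp add: is_channel_def)
  define D where "D = b * b"
  have D: "0 < D" using b by (simp add: D_def)
  define Z1 where "Z1 = app (Sw a D) (kron D F R)"
  have Z1: "Z1 = (\<lambda>p q. if p < D*a \<and> q < D*a then F (p mod a) (q mod a) * R (p div a) (q div a) else 0)"
    unfolding Z1_def by (rule app_Sw_kron[OF a D])
  define Z2 where "Z2 = app (amp D N) Z1"
  have Z2: "Z2 x y = (if x < D*b \<and> y < D*b then R (x div b) (y div b) * app N F (x mod b) (y mod b) else 0)" for x y
  proof (cases "x < D*b \<and> y < D*b")
    case True
    then have xd: "x div b < D" "y div b < D" by (auto simp: less_mult_imp_div_less)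
    have "app N (\<lambda>i j. Z1 (x div b * a + i) (y div b * a + j)) = app N (\<lambda>i j. R (x div b) (y div b) * F i j)"
    proof (rule app_cong)
      fix i j assume i: "i < din N" and j: "j < din N"
      have "x div b * a + i < D * a" "y div b * a + j < D * a"
        using xd i j by (auto intro!: blk_lt simp: a_def)
      then show "Z1 (x div b * a + i) (y div b * a + j) = R (x div b) (y div b) * F i j"
        using i j a by (simp add: Z1 a_def)
    qed
    then show ?thesis using True
      by (simp add: Z2_def app_amp idtensor_def lin_scale[OF lin] b_def[symmetric] a_def[symmetric])
  next
    case False then show ?thesis by (auto simp: Z2_def app_amp idtensor_def b_def)
  qed
  define Z3 where "Z3 = app (G0 b) Z2"
  have Z3: "Z3 p q = (if p < b \<and> q < b then
     (\<Sum>y0<b*b. R y0 y0 * (\<Sum>i<b. \<Sum>j<b. weyl b y0 p i * app N F i j * cnj (weyl b y0 q j))) else 0)" for p q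
  proof (cases "p < b \<and> q < b")
    case True
    have "(\<Sum>y0<b*b. \<Sum>i<b. \<Sum>j<b. weyl b y0 p i * Z2 (y0*b+i) (y0*b+j) * cnj (weyl b y0 q j))
        = (\<Sum>y0<b*b. R y0 y0 * (\<Sum>i<b. \<Sum>j<b. weyl b y0 p i * app N F i j * cnj (weyl b y0 q j)))"
    proof (rule sum.cong[OF refl])
      fix y0 assume y0: "y0 \<in> {..<b*b}"
      have "(\<Sum>i<b. \<Sum>j<b. weyl b y0 p i * Z2 (y0*b+i) (y0*b+j) * cnj (weyl b y0 q j))
          = (\<Sum>i<b. \<Sum>j<b. R y0 y0 * (weyl b y0 p i * app N F i j * cnj (weyl b y0 q j)))"
      proof (intro sum.cong refl)
        fix i j assume i: "i \<in> {..<b}" and j: "j \<in> {..<b}"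
        have lt: "y0*b+i < D*b" "y0*b+j < D*b" using y0 i j by (auto intro!: blk_lt simp: D_def)
        show "weyl b y0 p i * Z2 (y0*b+i) (y0*b+j) * cnj (weyl b y0 q j) = R y0 y0 * (weyl b y0 p i * app N F i j * cnj (weyl b y0 q j))"
          using lt i j by (simp add: Z2)
      qed
      also have "\<dots> = R y0 y0 * (\<Sum>i<b. \<Sum>j<b. weyl b y0 p i * app N F i j * cnj (weyl b y0 q j))"
        by (simp add: sum_distrib_left)
      finally show "(\<Sum>i<b. \<Sum>j<b. weyl b y0 p i * Z2 (y0*b+i) (y0*b+j) * cnj (weyl b y0 q j))
          = R y0 y0 * (\<Sum>i<b. \<Sum>j<b. weyl b y0 p i * app N F i j * cnj (weyl b y0 q j))" .
    qed
    then show ?thesis using True by (simp add: Z3_def app_G0)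
  next
    case False then show ?thesis by (auto simp: Z3_def app_G0)
  qed
  have "app (Ecomp N) (kron (b*b) F R) = app (Apd b) Z3"
    by (simp add: Ecomp_def app_comp Z3_def Z2_def Z1_def D_def a_def b_def)
  also have "\<dots> = (\<lambda>x y. if x < b*b \<and> y < b*b then
     (\<Sum>y0<b*b. R y0 y0 * (\<Sum>i<b. \<Sum>j<b. weyl b y0 (x div b) i * app N F i j * cnj (weyl b y0 (y div b) j)))
     * unif b (x mod b) (y mod b) else 0)"
    by (auto simp: app_Apd Z3 less_mult_imp_div_less fun_eq_iff)
  finally show ?thesis .
qed




abbreviation u1 :: channel where "u1 \<equiv> state_chan 1 (unif 1)"

definition Tch :: "channel \<Rightarrow> channel" where
  "Tch N = ctensor N (state_chan (dout N) (unif (dout N)))"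

lemma Tch_simps[simp]: "din (Tch N) = din N" "dout (Tch N) = dout N * dout N"
  by (simp_all add: Tch_def)

lemma app_Tch:
  assumes cN: "is_channel N"
  shows "app (Tch N) X = (\<lambda>x y. if x < dout N * dout N \<and> y < dout N * dout N then
     app N X (x div dout N) (y div dout N) * unif (dout N) (x mod dout N) (y mod dout N) else 0)"
proof -
  have lin: "is_linear_map N" and b: "0 < dout N" using cN by (auto simp: is_channel_def)
  show ?thesis unfolding Tch_def
    by (simp add: app_ctensor1[OF lin] app_state unitmat_def b fun_eq_iff)
qed

lemma Tch_channel:
  assumes cN: "is_channel N"
  shows "is_channel (Tch N)"
proof -
  have b: "1 \<le> dout N" using cN by (auto simp: is_channel_def)
  have c: "is_channel (comp (Apd (dout N)) N)"
    by (rule comp_channel[OF Apd_channel[OF b] cN]) simp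
  have "chan_eq (comp (Apd (dout N)) N) (Tch N)"
    by (simp add: chan_eq_def app_comp app_Apd app_Tch[OF cN] fun_eq_iff)
  then show ?thesis using c by (rule chan_eq_channel)
qed

lemma Ecomp_mixing:
  assumes cN: "is_channel N" and dens: "density (din N) \<tau>"
  shows "app (Ecomp N) (kron (dout N * dout N) \<tau> (unif (dout N * dout N))) = restr (dout N * dout N) (unif (dout N * dout N))"
proof -
  define b where "b = dout N"
  have b: "0 < b" using cN by (auto simp: is_channel_def b_def)
  have tr: "mtrace b (app N \<tau>) = 1"
    using ch_tp[OF cN] dens by (simp add: density_def b_def)
  have "app (Ecomp N) (kron (b*b) \<tau> (unif (b*b))) x y = unif (b*b) x y" for x y
  proof (cases "x < b*b \<and> y < b*b")
    case True
    have xb: "x div b < b" "y div b < b" using True by (auto simp: less_mult_imp_div_less)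
    have "(\<Sum>y0<b*b. unif (b*b) y0 y0 * (\<Sum>i<b. \<Sum>j<b. weyl b y0 (x div b) i * app N \<tau> i j * cnj (weyl b y0 (y div b) j)))
        = (\<Sum>y0<b*b. (1 / of_nat (b*b)) * (\<Sum>i<b. \<Sum>j<b. weyl b y0 (x div b) i * app N \<tau> i j * cnj (weyl b y0 (y div b) j)))"
      by (intro sum.cong refl) (simp add: unif_eq)
    also have "\<dots> = (1 / of_nat (b*b)) * (if x div b = y div b then of_nat b * (\<Sum>q<b. app N \<tau> q q) else 0)"
      by (simp only: sum_distrib_left[symmetric] twirl[OF xb])
    also have "\<dots> = (if x div b = y div b then 1 / of_nat b else 0)"
      using tr b by (simp add: mtrace_def)
    finally have e: "(\<Sum>y0<b*b. unif (b*b) y0 y0 * (\<Sum>i<b. \<Sum>j<b. weyl b y0 (x div b) i * app N \<tau> i j * cnj (weyl b y0 (y div b) j)))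
        = (if x div b = y div b then 1 / of_nat b else 0)" .
    have "(if x div b = y div b then 1 / of_nat b else 0) * unif b (x mod b) (y mod b) = unif (b*b) x y"
      using True b by (auto simp: unif_eq) (metis div_mult_mod_eq)
    then show ?thesis using True e app_Ecomp_kron[OF cN] by (simp add: b_def)
  next
    case False
    then show ?thesis using app_Ecomp_kron[OF cN] by (auto simp: b_def unif_eq)
  qed
  then show ?thesis by (simp add: fun_eq_iff unif_restr b_def)
qed


definition srcL :: "nat \<Rightarrow> channel" where
  "srcL D = comp (iso_chan 1 D (embm 1)) u1"

lemma srcL_simps[simp]: "din (srcL D) = 1" "dout (srcL D) = D"
  by (simp_all add: srcL_def)

lemma app_srcL: "0 < D \<Longrightarrow> app (srcL D) Z = (\<lambda>p q. if p = 0 \<and> q = 0 then Z 0 0 else 0)"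
  by (auto simp: srcL_def app_comp app_embm app_state unif_eq fun_eq_iff)

lemma srcL_channel: "1 \<le> D \<Longrightarrow> is_channel (srcL D)"
  unfolding srcL_def
  by (rule comp_channel[OF iso_channel[OF embm_iso] state_unif_channel]) auto

lemma idtensor_srcL:
  assumes D: "0 < D" and x: "x < a * D" and y: "y < a * D"
  shows "idtensor a (srcL D) Y x y = kron D Y (\<lambda>i j. if i = 0 \<and> j = 0 then 1 else 0) x y"
  using x y D by (simp add: idtensor_def app_srcL kron_def)

lemma Tch_ceq:
  assumes cN: "is_channel N"
  shows "chan_eq (Tch N) (super (din (Tch N)) (din N) (embm (din N)) (Ecomp N) (srcL (dout N * dout N)))"
  unfolding chan_eq_def
proof (intro conjI allI)
  define a where "a = din N"
  define b where "b = dout N"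
  have a: "0 < a" and b: "0 < b" using cN by (auto simp: is_channel_def a_def b_def)
  show "din (Tch N) = din (super (din (Tch N)) (din N) (embm (din N)) (Ecomp N) (srcL (dout N * dout N)))" by simp
  show "dout (Tch N) = dout (super (din (Tch N)) (din N) (embm (din N)) (Ecomp N) (srcL (dout N * dout N)))" by simp
  fix X
  define R0 :: cmat where "R0 = (\<lambda>i j. if i = 0 \<and> j = 0 then (1::complex) else 0)"
  have "app (super (din (Tch N)) (din N) (embm (din N)) (Ecomp N) (srcL (dout N * dout N))) X
      = app (Ecomp N) (idtensor a (srcL (b*b)) (app (iso_chan a (a * 1) (embm a)) X))"
    by (subst app_super) (simp_all add: a_def b_def)
  also have "\<dots> = app (Ecomp N) (kron (b*b) (app (iso_chan a (a * 1) (embm a)) X) R0)"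
  proof (rule app_cong)
    fix i j assume "i < din (Ecomp N)" "j < din (Ecomp N)"
    then show "idtensor a (srcL (b*b)) (app (iso_chan a (a * 1) (embm a)) X) i j = kron (b*b) (app (iso_chan a (a * 1) (embm a)) X) R0 i j"
      using b by (simp add: idtensor_srcL R0_def a_def b_def)
  qed
  also have "\<dots> = app (Tch N) X"
  proof (rule ext, rule ext)
    fix x y
    show "app (Ecomp N) (kron (b*b) (app (iso_chan a (a * 1) (embm a)) X) R0) x y = app (Tch N) X x y"
    proof (cases "x < b*b \<and> y < b*b")
      case True
      have xb: "x div b < b" "y div b < b" using True by (auto simp: less_mult_imp_div_less)
      have r: "app N (app (iso_chan a (a * 1) (embm a)) X) = app N X"
        by (rule app_cong) (simp add: app_embm a_def)
      have "(\<Sum>y0<b*b. R0 y0 y0 * (\<Sum>i<b. \<Sum>j<b. weyl b y0 (x div b) i * app N X i j * cnj (weyl b y0 (y div b) j)))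
          = (\<Sum>i<b. \<Sum>j<b. weyl b 0 (x div b) i * app N X i j * cnj (weyl b 0 (y div b) j))"
        using b by (simp add: R0_def ifz_mult_l)
      also have "\<dots> = (\<Sum>i<b. \<Sum>j<b. if i = x div b then (if j = y div b then app N X i j else 0) else 0)"
        by (intro sum.cong refl) (simp add: weyl0)
      also have "\<dots> = app N X (x div b) (y div b)" using xb by (simp add: sum_ifz_out)
      finally show ?thesis using True app_Ecomp_kron[OF cN] r by (simp add: app_Tch[OF cN] b_def)
    next
      case False
      then show ?thesis using app_Ecomp_kron[OF cN] by (auto simp: app_Tch[OF cN] b_def)
    qed
  qed
  finally show "app (Tch N) X = app (super (din (Tch N)) (din N) (embm (din N)) (Ecomp N) (srcL (dout N * dout N))) X" by simp
qed

lemma maj_lower: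
  assumes cN: "is_channel N"
  shows "maj u1 (Tch N)"
proof -
  define a where "a = din N"
  define b where "b = dout N"
  have a: "1 \<le> a" and b: "1 \<le> b" using cN by (auto simp: is_channel_def a_def b_def)
  have bb: "1 \<le> b * b" using b by simp
  have isoW: "is_isometry 1 (b*b) (embm 1)" using bb by (intro embm_iso) auto
  have src_eq: "comp (iso_chan 1 (b*b) (embm 1)) u1 = srcL (b*b)" by (simp add: srcL_def)
  have isoV: "is_isometry (din (Tch N)) (a * din (srcL (b*b))) (embm a)"
    using a by (simp add: a_def embm_iso)
  have real: "is_realization (din (srcL (b*b))) (dout (srcL (b*b))) (din (Tch N)) a (embm a) (Ecomp N)"
    using isoV a Ecomp_channel[OF cN] by (simp add: is_realization_def a_def b_def)
  have mix: "mixing_realization (din (srcL (b*b))) (dout (srcL (b*b))) (din (Tch N)) a (embm a) (Ecomp N)"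
    unfolding mixing_realization_def
  proof (intro conjI allI impI)
    show "is_realization (din (srcL (b*b))) (dout (srcL (b*b))) (din (Tch N)) a (embm a) (Ecomp N)" by (rule real)
  next
    fix r' V' E' assume "is_realization (din (srcL (b*b))) (dout (srcL (b*b))) (din (Tch N)) r' V' E'"
    then have "is_isometry a r' V'" by (simp add: is_realization_def a_def)
    then show "a \<le> r'" by (rule iso_dim)
  next
    fix \<tau> assume "density a \<tau>"
    then show "app (Ecomp N) (kron (dout (srcL (b*b))) \<tau> (unif (dout (srcL (b*b))))) = restr (dout (srcL (b*b))) (unif (dout (srcL (b*b))))"
      using Ecomp_mixing[OF cN] by (simp add: a_def b_def)
  qed
  have ms: "maj_same (srcL (b*b)) (Tch N)"
    unfolding maj_same_def using mix Tch_ceq[OF cN] by (auto simp: a_def b_def)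
  show ?thesis unfolding maj_def using isoW ms bb src_eq by (auto simp: b_def)
qed




abbreviation U :: "nat \<Rightarrow> channel" where "U n \<equiv> state_chan n (unif n)"

lemma app_U: "app (U n) X = (\<lambda>p q. mtrace 1 X * unif n p q)"
  by (auto simp: app_state mtrace_def unif_eq fun_eq_iff)

lemma U_lin: "1 \<le> n \<Longrightarrow> is_linear_map (U n)"
  using state_unif_channel by (simp add: is_channel_def)

lemma unif_mult:
  assumes m: "0 < m" and n: "0 < n" and x: "x < m*n" and y: "y < m*n"
  shows "unif m (x div n) (y div n) * unif n (x mod n) (y mod n) = unif (m*n) x y"
proof -
  have "x div n < m" "y div n < m" using x y by (auto simp: less_mult_imp_div_less)
  moreover have "(x div n = y div n \<and> x mod n = y mod n) = (x = y)" by (metis div_mult_mod_eq)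
  ultimately show ?thesis using m n x y by (auto simp: unif_eq)
qed

lemma app_ctensor_U:
  assumes m: "1 \<le> m" and n: "1 \<le> n"
  shows "app (ctensor (U m) (U n)) X = (\<lambda>x y. mtrace (din (ctensor (U m) (U n))) X * unif (dout (ctensor (U m) (U n))) x y)"
proof (rule ext, rule ext)
  fix x y
  show "app (ctensor (U m) (U n)) X x y = mtrace (din (ctensor (U m) (U n))) X * unif (dout (ctensor (U m) (U n))) x y"
    using m n unif_mult[of m n x y]
    by (auto simp: app_ctensor1[OF U_lin[OF m]] app_U mtrace_def unitmat_def unif_eq)
qed

lemma ctensor_U_channel:
  assumes m: "1 \<le> m" and n: "1 \<le> n"
  shows "is_channel (ctensor (U m) (U n))"
proof -
  have "chan_eq (U (m*n)) (ctensor (U m) (U n))"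
    using m n by (simp add: chan_eq_def app_U app_ctensor_U mtrace_def)
  then show ?thesis by (rule chan_eq_channel) (use m n in \<open>simp add: state_unif_channel\<close>)
qed

definition Rch :: "nat \<Rightarrow> nat \<Rightarrow> channel" where
  "Rch a b = ctensor (trch a) (U b)"

lemma Rch_simps[simp]: "din (Rch a b) = a" "dout (Rch a b) = b"
  by (simp_all add: Rch_def)

lemma trch_lin: "1 \<le> a \<Longrightarrow> is_linear_map (trch a)"
  using trch_channel by (simp add: is_channel_def)

lemma app_Rch:
  assumes a: "1 \<le> a" and b: "1 \<le> b"
  shows "app (Rch a b) X = (\<lambda>x y. mtrace (din (Rch a b)) X * unif (dout (Rch a b)) x y)"
proof (rule ext, rule ext)
  fix x y
  show "app (Rch a b) X x y = mtrace (din (Rch a b)) X * unif (dout (Rch a b)) x y"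
    using a b by (auto simp: Rch_def app_ctensor1[OF trch_lin[OF a]] app_trch app_U mtrace_def unitmat_def unif_eq)
qed

lemma Rch_channel:
  assumes a: "1 \<le> a" and b: "1 \<le> b"
  shows "is_channel (Rch a b)"
proof -
  have "chan_eq (depol a b) (Rch a b)"
    using a b by (simp add: chan_eq_def app_depol app_Rch)
  then show ?thesis by (rule chan_eq_channel) (use a b in \<open>simp add: depol_channel\<close>)
qed

theorem mainTheorem11:
  fixes H :: "channel \<Rightarrow> real"
  assumes monotone: "\<And>N M. is_channel N \<Longrightarrow> is_channel M \<Longrightarrow> maj N M \<Longrightarrow> H N \<le> H M"
    and additive: "\<And>N M. is_channel N \<Longrightarrow> is_channel M \<Longrightarrow> H (ctensor N M) = H N + H M"
    and nonzero: "\<exists>N. is_channel N \<and> H N \<noteq> 0"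
  shows "H (state_chan 2 (unif 2)) > 0"
proof (rule ccontr)
  assume "\<not> H (state_chan 2 (unif 2)) > 0"
  then have h2: "H (U 2) \<le> 0" by simp
  have cU: "\<And>n. 1 \<le> n \<Longrightarrow> is_channel (U n)" by (rule state_unif_channel)
  have appU: "\<And>n X. app (U n) X = (\<lambda>p q. mtrace (din (U n)) X * unif (dout (U n)) p q)"
    by (simp add: app_U)
  have c11: "is_channel (ctensor u1 u1)" by (rule ctensor_U_channel) auto
  have h1a: "H u1 \<le> H (ctensor u1 u1)"
    by (rule monotone[OF cU c11 maj_depol[OF cU c11]]) (auto simp: app_ctensor_U)
  have h1b: "H (ctensor u1 u1) \<le> H u1"
    by (rule monotone[OF c11 cU maj_depol[OF c11 cU]]) (auto simp: appU)
  have h1: "H u1 = 0" using h1a h1b additive[OF cU cU] by simp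
  have hpow: "H (U (2^k)) \<le> real k * H (U 2)" for k
  proof (induction k)
    case 0 then show ?case using h1 by simp
  next
    case (Suc k)
    have ck: "is_channel (ctensor (U 2) (U (2^k)))" by (rule ctensor_U_channel) auto
    have "H (U (2^Suc k)) \<le> H (ctensor (U 2) (U (2^k)))"
      by (rule monotone[OF cU ck maj_depol[OF cU ck]]) (auto simp: app_ctensor_U)
    also have "\<dots> = H (U 2) + H (U (2^k))" by (rule additive[OF cU cU]) auto
    finally show ?case using Suc by (simp add: algebra_simps)
  qed
  have hb: "H (U b) \<le> 0" if b: "1 \<le> b" for b
  proof -
    have "b \<le> 2^b" by (rule less_imp_le[OF less_exp])
    then have "H (U b) \<le> H (U (2^b))"
      using b by (intro monotone[OF cU cU maj_depol[OF cU cU]]) (auto simp: appU)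
    also have "\<dots> \<le> real b * H (U 2)" by (rule hpow)
    also have "\<dots> \<le> 0" using h2 by (simp add: mult_nonneg_nonpos)
    finally show ?thesis .
  qed
  have ht: "H (trch a) \<le> 0" if a: "1 \<le> a" for a
  proof -
    have "H (trch a) \<le> H u1"
      using a by (intro monotone[OF trch_channel cU maj_depol[OF trch_channel cU]]) (auto simp: appU)
    then show ?thesis using h1 by simp
  qed
  obtain N where cN: "is_channel N" and HN: "H N \<noteq> 0" using nonzero by blast
  define a where "a = din N"
  define b where "b = dout N"
  have a: "1 \<le> a" and b: "1 \<le> b" using cN by (auto simp: is_channel_def a_def b_def)
  have up: "H N \<le> 0"
  proof -
    have cR: "is_channel (Rch a b)" by (rule Rch_channel[OF a b])
    have "H N \<le> H (Rch a b)"
      by (rule monotone[OF cN cR maj_depol[OF cN cR]]) (use app_Rch[OF a b] in \<open>auto simp: a_def b_def\<close>)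
    also have "\<dots> = H (trch a) + H (U b)" unfolding Rch_def
      by (rule additive[OF trch_channel[OF a] cU[OF b]])
    also have "\<dots> \<le> 0" using ht[OF a] hb[OF b] by simp
    finally show ?thesis .
  qed
  have low: "0 \<le> H N"
  proof -
    have "H u1 \<le> H (Tch N)"
      by (rule monotone[OF cU Tch_channel[OF cN] maj_lower[OF cN]]) simp
    also have "\<dots> = H N + H (U b)" unfolding Tch_def b_def
      by (rule additive[OF cN cU]) (use b in \<open>simp add: b_def\<close>)
    finally show ?thesis using h1 hb[OF b] by simp
  qed
  show False using up low HN by simp
qed


end
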